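(* Let $f,g_1,g_2\in L^2(\mathbb{R}^2\times\mathbb{R})$ with $\|f\|_{L^2}=\|g_1\|_{L^2}=\|g_2\|_{L^2}=1$ and $\operatorname{supp}f\subset\mathfrak{P}_N\cap\mathfrak{W}^\pm_L$, $\operatorname{supp}g_k\subset\mathfrak{Q}^A_{j_k}\cap\mathfrak{P}_{N_k}\cap\mathfrak{S}_{L_k}$ ($k=1,2$), where $1\ll N\lesssim N_1\sim N_2$, $A\sim N_1$ and $|j_1-j_2|\le16$. Then for all dyadic $L,L_1,L_2\ge1$, $$\Big|\int f(\zeta_1-\zeta_2)g_1(\zeta_1)g_2(\zeta_2)\,d\zeta_1d\zeta_2\Big|\lesssim L_1^{5/12}L_2^{5/12}L^{5/12}\frac1{N^{1/2}}\Big(\frac{N}{N_1}\Big)^{1/4}.$$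
   Context: Points are $\zeta=(\xi,\tau)\in\mathbb{R}^2\times\mathbb{R}$. Dyadic numbers are $2^n$, $n\ge0$; $N,N_1,N_2,A$ are dyadic. $\mathfrak{P}_1=\{|\xi|\le2\}$, $\mathfrak{P}_N=\{N/2\le|\xi|\le2N\}$ ($N\ge2$); $\mathfrak{S}_1=\{|\tau+|\xi|^2|\le2\}$, $\mathfrak{S}_L=\{L/2\le|\tau+|\xi|^2|\le2L\}$; $\mathfrak{W}^\pm_1=\{|\tau\pm|\xi||\le2\}$, $\mathfrak{W}^\pm_L=\{L/2\le|\tau\pm|\xi||\le2L\}$ ($L\ge2$). For $A\in\mathbb{N}$, $0\le j\le A-1$: $\Theta^A_j=[\frac{\pi}{A}(j-2),\frac{\pi}{A}(j+2)]\cup[-\pi+\frac{\pi}{A}(j-2),-\pi+\frac{\pi}{A}(j+2)]$, $\mathfrak{Q}^A_j=\{(|\xi|\cos\theta,|\xi|\sin\theta,\tau):\theta\in\Theta^A_j\}$. $A\lesssim B$: $A\le cB$ with an absolute constant; $\sim$: both directions; $1\ll N$: $N\ge C$ for a sufficiently large absolute constant $C$. *)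

theory Defs
  imports "HOL-Analysis.Analysis"
begin

text \<open>Points zeta = (xi, tau) with xi = (xi1, xi2) in R^2 and tau in R.\<close>
type_synonym pt = "(real \<times> real) \<times> real"

definition xnorm :: "real \<times> real \<Rightarrow> real" where
  "xnorm xi = sqrt ((fst xi)\<^sup>2 + (snd xi)\<^sup>2)"

definition dyadic :: "real \<Rightarrow> bool" where
  "dyadic x \<longleftrightarrow> (\<exists>n::nat. x = 2 ^ n)"

definition PP :: "real \<Rightarrow> pt set" where
  "PP N = (if N = 1 then {z. xnorm (fst z) \<le> 2}
           else {z. N / 2 \<le> xnorm (fst z) \<and> xnorm (fst z) \<le> 2 * N})"

definition SS :: "real \<Rightarrow> pt set" where
  "SS L = (if L = 1 then {z. \<bar>snd z + (xnorm (fst z))\<^sup>2\<bar> \<le> 2}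
           else {z. L / 2 \<le> \<bar>snd z + (xnorm (fst z))\<^sup>2\<bar> \<and> \<bar>snd z + (xnorm (fst z))\<^sup>2\<bar> \<le> 2 * L})"

text \<open>Modulation set W^pm_L for the wave symbol tau pm |xi|; the sign s is 1 or -1.\<close>
definition WW :: "real \<Rightarrow> real \<Rightarrow> pt set" where
  "WW s L = (if L = 1 then {z. \<bar>snd z + s * xnorm (fst z)\<bar> \<le> 2}
           else {z. L / 2 \<le> \<bar>snd z + s * xnorm (fst z)\<bar> \<and> \<bar>snd z + s * xnorm (fst z)\<bar> \<le> 2 * L})"

definition Theta :: "nat \<Rightarrow> nat \<Rightarrow> real set" where
  "Theta A j = {pi / real A * (real j - 2) .. pi / real A * (real j + 2)}
             \<union> {- pi + pi / real A * (real j - 2) .. - pi + pi / real A * (real j + 2)}"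

definition QQ :: "nat \<Rightarrow> nat \<Rightarrow> pt set" where
  "QQ A j = {z. \<exists>\<theta>\<in>Theta A j.
               fst (fst z) = xnorm (fst z) * cos \<theta> \<and> snd (fst z) = xnorm (fst z) * sin \<theta>}"

definition L2unit :: "(pt \<Rightarrow> complex) \<Rightarrow> bool" where
  "L2unit f \<longleftrightarrow> f \<in> borel_measurable lborel
     \<and> integrable lborel (\<lambda>z. (norm (f z))\<^sup>2)
     \<and> (\<integral>z. (norm (f z))\<^sup>2 \<partial>lborel) = 1"

end

theory Submission
  imports Defs
begin

lemma nn_integral_lborel_shift:
  fixes t :: "'a::euclidean_space"
  assumes [measurable]: "h \<in> borel_measurable borel"
  shows "(\<integral>\<^sup>+x. h (t + x) \<partial>lborel) = (\<integral>\<^sup>+x. h x \<partial>lborel)"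
proof -
  have "(\<integral>\<^sup>+x. h x \<partial>lborel) = (\<integral>\<^sup>+x. h x \<partial>(distr lborel borel ((+) t)))"
    by (simp add: lborel_distr_plus)
  also have "\<dots> = (\<integral>\<^sup>+x. h (t + x) \<partial>lborel)"
    by (rule nn_integral_distr) auto
  finally show ?thesis ..
qed

lemma lborel_distr_reflect:
  fixes t :: "'a::euclidean_space"
  shows "distr lborel borel (\<lambda>x. t - x) = lborel"
proof -
  from lborel_affine[of "-1" t] show ?thesis by (simp add: density_1)
qed

lemma nn_integral_lborel_reflect:
  fixes t :: "'a::euclidean_space"
  assumes [measurable]: "h \<in> borel_measurable borel"
  shows "(\<integral>\<^sup>+x. h (t - x) \<partial>lborel) = (\<integral>\<^sup>+x. h x \<partial>lborel)"
proof -
  have "(\<integral>\<^sup>+x. h x \<partial>lborel) = (\<integral>\<^sup>+x. h x \<partial>(distr lborel borel (\<lambda>x. t - x)))"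
    by (simp add: lborel_distr_reflect)
  also have "\<dots> = (\<integral>\<^sup>+x. h (t - x) \<partial>lborel)"
    by (rule nn_integral_distr) auto
  finally show ?thesis ..
qed

lemma lborel_shear_y:
  fixes a :: real
  shows "distr lborel borel (\<lambda>(x,y). (x, y + a*x)) = (lborel :: (real \<times> real) measure)"
proof (rule measure_eqI)
  show "sets (distr lborel borel (\<lambda>(x,y). (x, y + a*x))) = sets (lborel :: (real \<times> real) measure)"
    by simp
next
  fix A :: "(real \<times> real) set"
  assume "A \<in> sets (distr lborel borel (\<lambda>(x,y). (x, y + a*x)))"
  then have A: "A \<in> sets (lborel \<Otimes>\<^sub>M lborel)" unfolding lborel_prod by simp
  have T[measurable]: "(\<lambda>(x,y). (x, y + a*x)) \<in> measurable (lborel \<Otimes>\<^sub>M lborel) (lborel \<Otimes>\<^sub>M lborel :: (real \<times> real) measure)"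
    by simp
  have Tb: "(\<lambda>(x,y). (x, y + a*x)) \<in> borel_measurable borel"
  proof -
    have "(\<lambda>(x,y). (x, y + a*x)) \<in> measurable (borel \<Otimes>\<^sub>M borel) (borel \<Otimes>\<^sub>M borel :: (real \<times> real) measure)"
      by measurable
    then show ?thesis unfolding borel_prod .
  qed
  have A0: "A \<in> sets borel" using A unfolding lborel_prod by simp
  have TA: "(\<lambda>(x,y). (x, y + a*x)) -` A \<in> sets (lborel \<Otimes>\<^sub>M lborel)"
    using measurable_sets[OF T A] by (simp add: space_pair_measure)
  have "emeasure (distr lborel borel (\<lambda>(x,y). (x, y + a*x))) A
        = emeasure (lborel \<Otimes>\<^sub>M lborel) ((\<lambda>(x,y). (x, y + a*x)) -` A)"
    using A0 Tb by (subst emeasure_distr) (simp_all add: lborel_prod)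
  also have "\<dots> = (\<integral>\<^sup>+x. emeasure lborel (Pair x -` ((\<lambda>(x,y). (x, y + a*x)) -` A)) \<partial>lborel)"
    by (rule lborel.emeasure_pair_measure_alt[OF TA])
  also have "\<dots> = (\<integral>\<^sup>+x. emeasure lborel (Pair x -` A) \<partial>lborel)"
  proof (rule nn_integral_cong)
    fix x :: real
    have PA: "Pair x -` A \<in> sets borel" using sets_Pair1[OF A] by simp
    have "Pair x -` ((\<lambda>(x,y). (x, y + a*x)) -` A) = ((+) (a*x)) -` (Pair x -` A) \<inter> space lborel"
      by (auto simp: add.commute)
    then have "emeasure lborel (Pair x -` ((\<lambda>(x,y). (x, y + a*x)) -` A))
       = emeasure (distr lborel borel ((+) (a*x))) (Pair x -` A)"
      using PA by (subst emeasure_distr) auto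
    also have "\<dots> = emeasure lborel (Pair x -` A)" by (simp add: lborel_distr_plus)
    finally show "emeasure lborel (Pair x -` ((\<lambda>(x,y). (x, y + a*x)) -` A)) = emeasure lborel (Pair x -` A)" .
  qed
  also have "\<dots> = emeasure (lborel \<Otimes>\<^sub>M lborel) A"
    by (rule lborel.emeasure_pair_measure_alt[OF A, symmetric])
  also have "\<dots> = emeasure lborel A" by (simp add: lborel_prod)
  finally show "emeasure (distr lborel borel (\<lambda>(x,y). (x, y + a*x))) A = emeasure lborel A" .
qed

lemma lborel_shear_x:
  fixes a :: real
  shows "distr lborel borel (\<lambda>(x,y). (x + a*y, y)) = (lborel :: (real \<times> real) measure)"
proof (rule measure_eqI)
  show "sets (distr lborel borel (\<lambda>(x,y). (x + a*y, y))) = sets (lborel :: (real \<times> real) measure)"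
    by simp
next
  fix A :: "(real \<times> real) set"
  assume "A \<in> sets (distr lborel borel (\<lambda>(x,y). (x + a*y, y)))"
  then have A: "A \<in> sets (lborel \<Otimes>\<^sub>M lborel)" unfolding lborel_prod by simp
  have T[measurable]: "(\<lambda>(x,y). (x + a*y, y)) \<in> measurable (lborel \<Otimes>\<^sub>M lborel) (lborel \<Otimes>\<^sub>M lborel :: (real \<times> real) measure)"
    by simp
  have Tb: "(\<lambda>(x,y). (x + a*y, y)) \<in> borel_measurable borel"
  proof -
    have "(\<lambda>(x,y). (x + a*y, y)) \<in> measurable (borel \<Otimes>\<^sub>M borel) (borel \<Otimes>\<^sub>M borel :: (real \<times> real) measure)"
      by measurable
    then show ?thesis unfolding borel_prod .
  qed
  have A0: "A \<in> sets borel" using A unfolding lborel_prod by simp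
  have TA: "(\<lambda>(x,y). (x + a*y, y)) -` A \<in> sets (lborel \<Otimes>\<^sub>M lborel)"
    using measurable_sets[OF T A] by (simp add: space_pair_measure)
  have "emeasure (distr lborel borel (\<lambda>(x,y). (x + a*y, y))) A
        = emeasure (lborel \<Otimes>\<^sub>M lborel) ((\<lambda>(x,y). (x + a*y, y)) -` A)"
    using A0 Tb by (subst emeasure_distr) (simp_all add: lborel_prod)
  also have "\<dots> = (\<integral>\<^sup>+y. emeasure lborel ((\<lambda>x. (x,y)) -` ((\<lambda>(x,y). (x + a*y, y)) -` A)) \<partial>lborel)"
    by (rule lborel_pair.emeasure_pair_measure_alt2[OF TA])
  also have "\<dots> = (\<integral>\<^sup>+y. emeasure lborel ((\<lambda>x. (x,y)) -` A) \<partial>lborel)"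
  proof (rule nn_integral_cong)
    fix y :: real
    have PA: "(\<lambda>x. (x,y)) -` A \<in> sets borel" using sets_Pair2[OF A] by simp
    have "(\<lambda>x. (x,y)) -` ((\<lambda>(x,y). (x + a*y, y)) -` A) = ((+) (a*y)) -` ((\<lambda>x. (x,y)) -` A) \<inter> space lborel"
      by (auto simp: add.commute)
    then have "emeasure lborel ((\<lambda>x. (x,y)) -` ((\<lambda>(x,y). (x + a*y, y)) -` A))
       = emeasure (distr lborel borel ((+) (a*y))) ((\<lambda>x. (x,y)) -` A)"
      using PA by (subst emeasure_distr) auto
    also have "\<dots> = emeasure lborel ((\<lambda>x. (x,y)) -` A)" by (simp add: lborel_distr_plus)
    finally show "emeasure lborel ((\<lambda>x. (x,y)) -` ((\<lambda>(x,y). (x + a*y, y)) -` A)) = emeasure lborel ((\<lambda>x. (x,y)) -` A)" .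
  qed
  also have "\<dots> = emeasure (lborel \<Otimes>\<^sub>M lborel) A"
    by (rule lborel_pair.emeasure_pair_measure_alt2[OF A, symmetric])
  also have "\<dots> = emeasure lborel A" by (simp add: lborel_prod)
  finally show "emeasure (distr lborel borel (\<lambda>(x,y). (x + a*y, y))) A = emeasure lborel A" .
qed

lemma lin2_measurable:
  fixes a b c d :: real
  shows "(\<lambda>(x,y). (a*x + b*y, c*x + d*y)) \<in> borel_measurable borel"
proof -
  have "(\<lambda>(x,y). (a*x + b*y, c*x + d*y)) \<in> measurable (borel \<Otimes>\<^sub>M borel) (borel \<Otimes>\<^sub>M borel :: (real \<times> real) measure)"
    by measurable
  then show ?thesis unfolding borel_prod .
qed

lemma distr_lborel_comp:
  fixes f g :: "'a::euclidean_space \<Rightarrow> 'a"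
  assumes [measurable]: "f \<in> borel_measurable borel" "g \<in> borel_measurable borel"
  assumes "distr lborel borel f = lborel" "distr lborel borel g = lborel"
  shows "distr lborel borel (f \<circ> g) = lborel"
proof -
  have "distr lborel borel (f \<circ> g) = distr (distr lborel borel g) borel f"
    by (subst distr_distr) auto
  also have "\<dots> = lborel" using assms(3,4) by simp
  finally show ?thesis .
qed

lemma lborel_rotation:
  fixes c s :: real
  assumes cs: "c\<^sup>2 + s\<^sup>2 = 1"
  shows "distr lborel borel (\<lambda>(x,y). (c*x - s*y, s*x + c*y)) = (lborel :: (real \<times> real) measure)"
proof (cases "c = -1")
  case True
  then have "s = 0" using cs by (simp add: power2_eq_square)
  then have "(\<lambda>(x,y). (c*x - s*y, s*x + c*y)) = (\<lambda>z::real\<times>real. 0 - z)"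
    using True by auto
  then show ?thesis using lborel_distr_reflect[of "0::real\<times>real"] by simp
next
  case False
  then have c1: "1 + c \<noteq> 0" by linarith
  define tt where "tt = - s / (1 + c)"
  have "(\<lambda>(x,y). (c*x - s*y, s*x + c*y)) =
        (\<lambda>(x,y). (x + tt*y, y)) \<circ> ((\<lambda>(x,y). (x, y + s*x)) \<circ> (\<lambda>(x,y). (x + tt*y, y)))"
  proof -
    have e1: "1 + tt * s = c" using c1 cs unfolding tt_def
      by (simp add: field_simps power2_eq_square)
    have "tt*(1 + tt * s) + tt = tt*(1+c)" using e1 by (simp add: algebra_simps)
    also have "\<dots> = -s" using c1 unfolding tt_def by simp
    finally have e2: "tt*(1 + tt * s) + tt = -s" .
    show ?thesis
    proof (rule ext, clarify)
      fix x y :: real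
      have "x + tt * y + tt * (y + s * (x + tt * y)) = (1 + tt * s)*x + (tt*(1+tt * s) + tt)*y"
        by (simp add: algebra_simps)
      moreover have "y + s * (x + tt * y) = s*x + (1 + tt * s)*y" by (simp add: algebra_simps)
      ultimately show "(c*x - s*y, s*x + c*y) = ((\<lambda>(x,y). (x + tt*y, y)) \<circ> ((\<lambda>(x,y). (x, y + s*x)) \<circ> (\<lambda>(x,y). (x + tt*y, y)))) (x,y)"
        using e1 e2 by simp
    qed
  qed
  moreover have "distr lborel borel ((\<lambda>(x,y). (x + tt*y, y)) \<circ> ((\<lambda>(x,y). (x, y + s*x)) \<circ> (\<lambda>(x,y). (x + tt*y, y)))) = (lborel :: (real \<times> real) measure)"
  proof -
    have m1: "(\<lambda>(x,y). (x + tt*y, y)) \<in> borel_measurable borel"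
      using lin2_measurable[of 1 tt 0 1] by simp
    have m2: "(\<lambda>(x,y). (x, y + s*x)) \<in> borel_measurable borel"
      using lin2_measurable[of 1 0 s 1] by (simp add: add.commute)
    have m3: "(\<lambda>(x,y). (x, y + s*x)) \<circ> (\<lambda>(x,y). (x + tt*y, y)) \<in> borel_measurable borel"
      by (rule measurable_comp[OF m1 m2])
    show ?thesis
      by (intro distr_lborel_comp lborel_shear_x lborel_shear_y m1 m2 m3)
  qed
  ultimately show ?thesis by simp
qed

lemma amgm_nn:
  fixes M :: "'b measure" and A B :: "'b \<Rightarrow> real"
  assumes [measurable]: "A \<in> borel_measurable M" "B \<in> borel_measurable M"
    and nA: "\<And>x. 0 \<le> A x" and nB: "\<And>x. 0 \<le> B x"
    and IA: "(\<integral>\<^sup>+x. ennreal ((A x)\<^sup>2) \<partial>M) \<le> 1"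
    and IB: "(\<integral>\<^sup>+x. ennreal ((B x)\<^sup>2) \<partial>M) \<le> ennreal m" and m: "m > 0"
  shows "(\<integral>\<^sup>+x. ennreal (A x * B x) \<partial>M) \<le> ennreal (sqrt m)"
proof -
  define t where "t = sqrt m"
  have t: "t > 0" using m by (simp add: t_def)
  have pw: "A x * B x \<le> (t/2) * (A x)\<^sup>2 + (1/(2*t)) * (B x)\<^sup>2" for x
  proof -
    have "0 \<le> (t * A x - B x)\<^sup>2" by simp
    then have "2 * t * (A x * B x) \<le> t\<^sup>2 * (A x)\<^sup>2 + (B x)\<^sup>2"
      by (simp add: power2_eq_square algebra_simps)
    then show ?thesis using t by (simp add: field_simps power2_eq_square)
  qed
  have "(\<integral>\<^sup>+x. ennreal (A x * B x) \<partial>M) \<le> (\<integral>\<^sup>+x. ennreal (t/2) * ennreal ((A x)\<^sup>2) + ennreal (1/(2*t)) * ennreal ((B x)\<^sup>2) \<partial>M)"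
    by (intro nn_integral_mono) (use pw t in \<open>simp add: ennreal_plus[symmetric] ennreal_mult[symmetric] ennreal_leI del: ennreal_plus\<close>)
  also have "\<dots> = ennreal (t/2) * (\<integral>\<^sup>+x. ennreal ((A x)\<^sup>2) \<partial>M) + ennreal (1/(2*t)) * (\<integral>\<^sup>+x. ennreal ((B x)\<^sup>2) \<partial>M)"
    by (simp add: nn_integral_add nn_integral_cmult)
  also have "\<dots> \<le> ennreal (t/2) * 1 + ennreal (1/(2*t)) * ennreal m"
    by (intro add_mono mult_left_mono IA IB) auto
  also have "\<dots> = ennreal (t/2 + m/(2*t))"
    using t m by (simp add: ennreal_mult[symmetric] ennreal_plus[symmetric] del: ennreal_plus)
  also have "t/2 + m/(2*t) = sqrt m"
    using t m unfolding t_def by (simp add: field_simps)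
  finally show ?thesis .
qed

lemma var1:
  fixes a b c :: "'a::euclidean_space \<Rightarrow> real" and Sa Sb Sc :: "'a set"
  assumes [measurable]: "a \<in> borel_measurable borel" "b \<in> borel_measurable borel" "c \<in> borel_measurable borel"
    "Sa \<in> sets borel" "Sb \<in> sets borel" "Sc \<in> sets borel"
    and na: "\<And>z. 0 \<le> a z" and nb: "\<And>z. 0 \<le> b z" and nc: "\<And>z. 0 \<le> c z"
    and Ia: "(\<integral>\<^sup>+z. ennreal ((a z)\<^sup>2) \<partial>lborel) \<le> 1"
    and Ib: "(\<integral>\<^sup>+z. ennreal ((b z)\<^sup>2) \<partial>lborel) \<le> 1"
    and Ic: "(\<integral>\<^sup>+z. ennreal ((c z)\<^sup>2) \<partial>lborel) \<le> 1"
    and supb: "\<And>z. z \<notin> Sb \<Longrightarrow> b z = 0" and supc: "\<And>z. z \<notin> Sc \<Longrightarrow> c z = 0"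
    and supa: "\<And>z. z \<notin> Sa \<Longrightarrow> a z = 0"
    and bd: "\<And>z. z \<in> Sa \<Longrightarrow> emeasure lborel {w. z + w \<in> Sb \<and> w \<in> Sc} \<le> ennreal m"
    and m: "m > 0"
  shows "(\<integral>\<^sup>+p. ennreal (a (fst p - snd p) * b (fst p) * c (snd p)) \<partial>(lborel \<Otimes>\<^sub>M lborel)) \<le> ennreal (sqrt m)"
proof -
  define A where "A p = b (fst p) * c (snd p)" for p :: "'a \<times> 'a"
  define B where "B p = (if fst p \<in> Sb \<and> snd p \<in> Sc then a (fst p - snd p) else 0)" for p :: "'a \<times> 'a"
  have [measurable]: "A \<in> borel_measurable (lborel \<Otimes>\<^sub>M lborel)" unfolding A_def by measurable
  have [measurable]: "B \<in> borel_measurable (lborel \<Otimes>\<^sub>M lborel)" unfolding B_def by measurable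
  have eq: "a (fst p - snd p) * b (fst p) * c (snd p) = A p * B p" for p
    unfolding A_def B_def using supb[of "fst p"] supc[of "snd p"] by auto
  have IA: "(\<integral>\<^sup>+p. ennreal ((A p)\<^sup>2) \<partial>(lborel \<Otimes>\<^sub>M lborel)) \<le> 1"
  proof -
    have "(\<integral>\<^sup>+p. ennreal ((A p)\<^sup>2) \<partial>(lborel \<Otimes>\<^sub>M lborel)) = (\<integral>\<^sup>+x. \<integral>\<^sup>+y. ennreal ((A (x,y))\<^sup>2) \<partial>lborel \<partial>lborel)"
      by (rule lborel.nn_integral_fst[symmetric]) measurable
    also have "\<dots> = (\<integral>\<^sup>+x. ennreal ((b x)\<^sup>2) * (\<integral>\<^sup>+y. ennreal ((c y)\<^sup>2) \<partial>lborel) \<partial>lborel)"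
      by (simp add: A_def power_mult_distrib ennreal_mult nn_integral_cmult)
    also have "\<dots> = (\<integral>\<^sup>+x. ennreal ((b x)\<^sup>2) \<partial>lborel) * (\<integral>\<^sup>+y. ennreal ((c y)\<^sup>2) \<partial>lborel)"
      by (rule nn_integral_multc) measurable
    also have "\<dots> \<le> 1 * 1" by (intro mult_mono Ib Ic) auto
    finally show ?thesis by simp
  qed
  have IB: "(\<integral>\<^sup>+p. ennreal ((B p)\<^sup>2) \<partial>(lborel \<Otimes>\<^sub>M lborel)) \<le> ennreal m"
  proof -
    define E where "E z = {w. z + w \<in> Sb \<and> w \<in> Sc}" for z
    have [measurable]: "E z \<in> sets borel" for z unfolding E_def by measurable
    have "(\<integral>\<^sup>+p. ennreal ((B p)\<^sup>2) \<partial>(lborel \<Otimes>\<^sub>M lborel)) = (\<integral>\<^sup>+y. \<integral>\<^sup>+x. ennreal ((B (x,y))\<^sup>2) \<partial>lborel \<partial>lborel)"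
      by (rule lborel_pair.nn_integral_snd[symmetric]) measurable
    also have "\<dots> = (\<integral>\<^sup>+y. \<integral>\<^sup>+z. ennreal ((B (y + z,y))\<^sup>2) \<partial>lborel \<partial>lborel)"
      by (intro nn_integral_cong nn_integral_lborel_shift[symmetric]) measurable
    also have "\<dots> = (\<integral>\<^sup>+y. \<integral>\<^sup>+z. ennreal ((a z)\<^sup>2) * indicator (E z) y \<partial>lborel \<partial>lborel)"
      by (intro nn_integral_cong) (auto simp: B_def E_def indicator_def add.commute)
    also have "\<dots> = (\<integral>\<^sup>+z. \<integral>\<^sup>+y. ennreal ((a z)\<^sup>2) * indicator (E z) y \<partial>lborel \<partial>lborel)"
    proof (rule lborel_pair.Fubini')
      have "(\<lambda>p. ennreal ((a (fst p))\<^sup>2) * (if fst p + snd p \<in> Sb \<and> snd p \<in> Sc then 1 else 0)) \<in> borel_measurable (lborel \<Otimes>\<^sub>M lborel)"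
        by measurable
      moreover have "(\<lambda>p. ennreal ((a (fst p))\<^sup>2) * (if fst p + snd p \<in> Sb \<and> snd p \<in> Sc then 1 else 0)) = (\<lambda>(z, y). ennreal ((a z)\<^sup>2) * indicator (E z) y)"
        by (auto simp: E_def indicator_def fun_eq_iff)
      ultimately show "(\<lambda>(z, y). ennreal ((a z)\<^sup>2) * indicator (E z) y) \<in> borel_measurable (lborel \<Otimes>\<^sub>M lborel)"
        by simp
    qed
    also have "\<dots> = (\<integral>\<^sup>+z. ennreal ((a z)\<^sup>2) * emeasure lborel (E z) \<partial>lborel)"
      by (intro nn_integral_cong nn_integral_cmult_indicator) simp
    also have "\<dots> \<le> (\<integral>\<^sup>+z. ennreal ((a z)\<^sup>2) * ennreal m \<partial>lborel)"
    proof (intro nn_integral_mono)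
      fix z
      show "ennreal ((a z)\<^sup>2) * emeasure lborel (E z) \<le> ennreal ((a z)\<^sup>2) * ennreal m"
      proof (cases "z \<in> Sa")
        case True then show ?thesis using bd[of z] unfolding E_def by (intro mult_left_mono) auto
      next
        case False then show ?thesis using supa[of z] by simp
      qed
    qed
    also have "\<dots> = (\<integral>\<^sup>+z. ennreal ((a z)\<^sup>2) \<partial>lborel) * ennreal m"
      by (rule nn_integral_multc) measurable
    also have "\<dots> \<le> 1 * ennreal m" by (intro mult_right_mono Ia) auto
    finally show ?thesis by simp
  qed
  have "(\<integral>\<^sup>+p. ennreal (a (fst p - snd p) * b (fst p) * c (snd p)) \<partial>(lborel \<Otimes>\<^sub>M lborel))
      = (\<integral>\<^sup>+p. ennreal (A p * B p) \<partial>(lborel \<Otimes>\<^sub>M lborel))" by (simp add: eq)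
  also have "\<dots> \<le> ennreal (sqrt m)"
    by (rule amgm_nn[OF _ _ _ _ IA IB m]) (auto simp: A_def B_def na nb nc)
  finally show ?thesis .
qed

lemma var2:
  fixes a b c :: "'a::euclidean_space \<Rightarrow> real" and Sa Sb Sc :: "'a set"
  assumes [measurable]: "a \<in> borel_measurable borel" "b \<in> borel_measurable borel" "c \<in> borel_measurable borel"
    "Sa \<in> sets borel" "Sb \<in> sets borel" "Sc \<in> sets borel"
    and na: "\<And>z. 0 \<le> a z" and nb: "\<And>z. 0 \<le> b z" and nc: "\<And>z. 0 \<le> c z"
    and Ia: "(\<integral>\<^sup>+z. ennreal ((a z)\<^sup>2) \<partial>lborel) \<le> 1"
    and Ib: "(\<integral>\<^sup>+z. ennreal ((b z)\<^sup>2) \<partial>lborel) \<le> 1"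
    and Ic: "(\<integral>\<^sup>+z. ennreal ((c z)\<^sup>2) \<partial>lborel) \<le> 1"
    and supb: "\<And>z. z \<notin> Sb \<Longrightarrow> b z = 0" and supc: "\<And>z. z \<notin> Sc \<Longrightarrow> c z = 0"
    and supa: "\<And>z. z \<notin> Sa \<Longrightarrow> a z = 0"
    and bd: "\<And>z. z \<in> Sb \<Longrightarrow> emeasure lborel {w. z - w \<in> Sa \<and> w \<in> Sc} \<le> ennreal m"
    and m: "m > 0"
  shows "(\<integral>\<^sup>+p. ennreal (a (fst p - snd p) * b (fst p) * c (snd p)) \<partial>(lborel \<Otimes>\<^sub>M lborel)) \<le> ennreal (sqrt m)"
proof -
  define A where "A p = a (fst p - snd p) * c (snd p)" for p :: "'a \<times> 'a"
  define B where "B p = (if fst p - snd p \<in> Sa \<and> snd p \<in> Sc then b (fst p) else 0)" for p :: "'a \<times> 'a"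
  have [measurable]: "A \<in> borel_measurable (lborel \<Otimes>\<^sub>M lborel)" unfolding A_def by measurable
  have [measurable]: "B \<in> borel_measurable (lborel \<Otimes>\<^sub>M lborel)" unfolding B_def by measurable
  have eq: "a (fst p - snd p) * b (fst p) * c (snd p) = A p * B p" for p
    unfolding A_def B_def using supa[of "fst p - snd p"] supc[of "snd p"] by auto
  have IA: "(\<integral>\<^sup>+p. ennreal ((A p)\<^sup>2) \<partial>(lborel \<Otimes>\<^sub>M lborel)) \<le> 1"
  proof -
    have "(\<integral>\<^sup>+p. ennreal ((A p)\<^sup>2) \<partial>(lborel \<Otimes>\<^sub>M lborel)) = (\<integral>\<^sup>+y. \<integral>\<^sup>+x. ennreal ((A (x,y))\<^sup>2) \<partial>lborel \<partial>lborel)"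
      by (rule lborel_pair.nn_integral_snd[symmetric]) measurable
    also have "\<dots> = (\<integral>\<^sup>+y. ennreal ((c y)\<^sup>2) * (\<integral>\<^sup>+x. ennreal ((a (x - y))\<^sup>2) \<partial>lborel) \<partial>lborel)"
      by (simp add: A_def power_mult_distrib ennreal_mult nn_integral_cmult nn_integral_multc mult.commute)
    also have "\<dots> = (\<integral>\<^sup>+y. ennreal ((c y)\<^sup>2) * (\<integral>\<^sup>+z. ennreal ((a z)\<^sup>2) \<partial>lborel) \<partial>lborel)"
    proof -
      have inner: "(\<integral>\<^sup>+x. ennreal ((a (x - y))\<^sup>2) \<partial>lborel) = (\<integral>\<^sup>+z. ennreal ((a z)\<^sup>2) \<partial>lborel)" for y
      proof -
        have "(\<integral>\<^sup>+x. ennreal ((a (x - y))\<^sup>2) \<partial>lborel) = (\<integral>\<^sup>+z. ennreal ((a ((y + z) - y))\<^sup>2) \<partial>lborel)"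
          by (rule nn_integral_lborel_shift[symmetric]) measurable
        then show ?thesis by simp
      qed
      show ?thesis by (simp add: inner)
    qed
    also have "\<dots> = (\<integral>\<^sup>+y. ennreal ((c y)\<^sup>2) \<partial>lborel) * (\<integral>\<^sup>+z. ennreal ((a z)\<^sup>2) \<partial>lborel)"
      by (rule nn_integral_multc) measurable
    also have "\<dots> \<le> 1 * 1" by (intro mult_mono Ia Ic) auto
    finally show ?thesis by simp
  qed
  have IB: "(\<integral>\<^sup>+p. ennreal ((B p)\<^sup>2) \<partial>(lborel \<Otimes>\<^sub>M lborel)) \<le> ennreal m"
  proof -
    define E where "E z = {w. z - w \<in> Sa \<and> w \<in> Sc}" for z
    have [measurable]: "E z \<in> sets borel" for z unfolding E_def by measurable
    have "(\<integral>\<^sup>+p. ennreal ((B p)\<^sup>2) \<partial>(lborel \<Otimes>\<^sub>M lborel)) = (\<integral>\<^sup>+x. \<integral>\<^sup>+y. ennreal ((B (x,y))\<^sup>2) \<partial>lborel \<partial>lborel)"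
      by (rule lborel.nn_integral_fst[symmetric]) measurable
    also have "\<dots> = (\<integral>\<^sup>+x. \<integral>\<^sup>+y. ennreal ((b x)\<^sup>2) * indicator (E x) y \<partial>lborel \<partial>lborel)"
      by (intro nn_integral_cong) (auto simp: B_def E_def indicator_def)
    also have "\<dots> = (\<integral>\<^sup>+x. ennreal ((b x)\<^sup>2) * emeasure lborel (E x) \<partial>lborel)"
      by (intro nn_integral_cong nn_integral_cmult_indicator) simp
    also have "\<dots> \<le> (\<integral>\<^sup>+x. ennreal ((b x)\<^sup>2) * ennreal m \<partial>lborel)"
    proof (intro nn_integral_mono)
      fix z
      show "ennreal ((b z)\<^sup>2) * emeasure lborel (E z) \<le> ennreal ((b z)\<^sup>2) * ennreal m"
      proof (cases "z \<in> Sb")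
        case True then show ?thesis using bd[of z] unfolding E_def by (intro mult_left_mono) auto
      next
        case False then show ?thesis using supb[of z] by simp
      qed
    qed
    also have "\<dots> = (\<integral>\<^sup>+z. ennreal ((b z)\<^sup>2) \<partial>lborel) * ennreal m"
      by (rule nn_integral_multc) measurable
    also have "\<dots> \<le> 1 * ennreal m" by (intro mult_right_mono Ib) auto
    finally show ?thesis by simp
  qed
  have "(\<integral>\<^sup>+p. ennreal (a (fst p - snd p) * b (fst p) * c (snd p)) \<partial>(lborel \<Otimes>\<^sub>M lborel))
      = (\<integral>\<^sup>+p. ennreal (A p * B p) \<partial>(lborel \<Otimes>\<^sub>M lborel))" by (simp add: eq)
  also have "\<dots> \<le> ennreal (sqrt m)"
    by (rule amgm_nn[OF _ _ _ _ IA IB m]) (auto simp: A_def B_def na nb nc)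
  finally show ?thesis .
qed

lemma var3:
  fixes a b c :: "'a::euclidean_space \<Rightarrow> real" and Sa Sb Sc :: "'a set"
  assumes [measurable]: "a \<in> borel_measurable borel" "b \<in> borel_measurable borel" "c \<in> borel_measurable borel"
    "Sa \<in> sets borel" "Sb \<in> sets borel" "Sc \<in> sets borel"
    and na: "\<And>z. 0 \<le> a z" and nb: "\<And>z. 0 \<le> b z" and nc: "\<And>z. 0 \<le> c z"
    and Ia: "(\<integral>\<^sup>+z. ennreal ((a z)\<^sup>2) \<partial>lborel) \<le> 1"
    and Ib: "(\<integral>\<^sup>+z. ennreal ((b z)\<^sup>2) \<partial>lborel) \<le> 1"
    and Ic: "(\<integral>\<^sup>+z. ennreal ((c z)\<^sup>2) \<partial>lborel) \<le> 1"
    and supb: "\<And>z. z \<notin> Sb \<Longrightarrow> b z = 0" and supc: "\<And>z. z \<notin> Sc \<Longrightarrow> c z = 0"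
    and supa: "\<And>z. z \<notin> Sa \<Longrightarrow> a z = 0"
    and bd: "\<And>z. z \<in> Sc \<Longrightarrow> emeasure lborel {w. w - z \<in> Sa \<and> w \<in> Sb} \<le> ennreal m"
    and m: "m > 0"
  shows "(\<integral>\<^sup>+p. ennreal (a (fst p - snd p) * b (fst p) * c (snd p)) \<partial>(lborel \<Otimes>\<^sub>M lborel)) \<le> ennreal (sqrt m)"
proof -
  define A where "A p = a (fst p - snd p) * b (fst p)" for p :: "'a \<times> 'a"
  define B where "B p = (if fst p - snd p \<in> Sa \<and> fst p \<in> Sb then c (snd p) else 0)" for p :: "'a \<times> 'a"
  have [measurable]: "A \<in> borel_measurable (lborel \<Otimes>\<^sub>M lborel)" unfolding A_def by measurable
  have [measurable]: "B \<in> borel_measurable (lborel \<Otimes>\<^sub>M lborel)" unfolding B_def by measurable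
  have eq: "a (fst p - snd p) * b (fst p) * c (snd p) = A p * B p" for p
    unfolding A_def B_def using supa[of "fst p - snd p"] supb[of "fst p"] by auto
  have IA: "(\<integral>\<^sup>+p. ennreal ((A p)\<^sup>2) \<partial>(lborel \<Otimes>\<^sub>M lborel)) \<le> 1"
  proof -
    have "(\<integral>\<^sup>+p. ennreal ((A p)\<^sup>2) \<partial>(lborel \<Otimes>\<^sub>M lborel)) = (\<integral>\<^sup>+x. \<integral>\<^sup>+y. ennreal ((A (x,y))\<^sup>2) \<partial>lborel \<partial>lborel)"
      by (rule lborel.nn_integral_fst[symmetric]) measurable
    also have "\<dots> = (\<integral>\<^sup>+x. ennreal ((b x)\<^sup>2) * (\<integral>\<^sup>+y. ennreal ((a (x - y))\<^sup>2) \<partial>lborel) \<partial>lborel)"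
      by (simp add: A_def power_mult_distrib ennreal_mult nn_integral_cmult nn_integral_multc mult.commute)
    also have "\<dots> = (\<integral>\<^sup>+x. ennreal ((b x)\<^sup>2) * (\<integral>\<^sup>+z. ennreal ((a z)\<^sup>2) \<partial>lborel) \<partial>lborel)"
    proof -
      have inner: "(\<integral>\<^sup>+y. ennreal ((a (x - y))\<^sup>2) \<partial>lborel) = (\<integral>\<^sup>+z. ennreal ((a z)\<^sup>2) \<partial>lborel)" for x
        by (rule nn_integral_lborel_reflect[where h="\<lambda>z. ennreal ((a z)\<^sup>2)"]) measurable
      show ?thesis by (simp add: inner)
    qed
    also have "\<dots> = (\<integral>\<^sup>+x. ennreal ((b x)\<^sup>2) \<partial>lborel) * (\<integral>\<^sup>+z. ennreal ((a z)\<^sup>2) \<partial>lborel)"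
      by (rule nn_integral_multc) measurable
    also have "\<dots> \<le> 1 * 1" by (intro mult_mono Ia Ib) auto
    finally show ?thesis by simp
  qed
  have IB: "(\<integral>\<^sup>+p. ennreal ((B p)\<^sup>2) \<partial>(lborel \<Otimes>\<^sub>M lborel)) \<le> ennreal m"
  proof -
    define E where "E z = {w. w - z \<in> Sa \<and> w \<in> Sb}" for z
    have [measurable]: "E z \<in> sets borel" for z unfolding E_def by measurable
    have "(\<integral>\<^sup>+p. ennreal ((B p)\<^sup>2) \<partial>(lborel \<Otimes>\<^sub>M lborel)) = (\<integral>\<^sup>+y. \<integral>\<^sup>+x. ennreal ((B (x,y))\<^sup>2) \<partial>lborel \<partial>lborel)"
      by (rule lborel_pair.nn_integral_snd[symmetric]) measurable
    also have "\<dots> = (\<integral>\<^sup>+y. \<integral>\<^sup>+x. ennreal ((c y)\<^sup>2) * indicator (E y) x \<partial>lborel \<partial>lborel)"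
      by (intro nn_integral_cong) (auto simp: B_def E_def indicator_def)
    also have "\<dots> = (\<integral>\<^sup>+y. ennreal ((c y)\<^sup>2) * emeasure lborel (E y) \<partial>lborel)"
      by (intro nn_integral_cong nn_integral_cmult_indicator) simp
    also have "\<dots> \<le> (\<integral>\<^sup>+y. ennreal ((c y)\<^sup>2) * ennreal m \<partial>lborel)"
    proof (intro nn_integral_mono)
      fix z
      show "ennreal ((c z)\<^sup>2) * emeasure lborel (E z) \<le> ennreal ((c z)\<^sup>2) * ennreal m"
      proof (cases "z \<in> Sc")
        case True then show ?thesis using bd[of z] unfolding E_def by (intro mult_left_mono) auto
      next
        case False then show ?thesis using supc[of z] by simp
      qed
    qed
    also have "\<dots> = (\<integral>\<^sup>+z. ennreal ((c z)\<^sup>2) \<partial>lborel) * ennreal m"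
      by (rule nn_integral_multc) measurable
    also have "\<dots> \<le> 1 * ennreal m" by (intro mult_right_mono Ic) auto
    finally show ?thesis by simp
  qed
  have "(\<integral>\<^sup>+p. ennreal (a (fst p - snd p) * b (fst p) * c (snd p)) \<partial>(lborel \<Otimes>\<^sub>M lborel))
      = (\<integral>\<^sup>+p. ennreal (A p * B p) \<partial>(lborel \<Otimes>\<^sub>M lborel))" by (simp add: eq)
  also have "\<dots> \<le> ennreal (sqrt m)"
    by (rule amgm_nn[OF _ _ _ _ IA IB m]) (auto simp: A_def B_def na nb nc)
  finally show ?thesis .
qed

lemma diam_cover:
  fixes Y :: "real set"
  assumes "d \<ge> 0" "\<And>u u'. u \<in> Y \<Longrightarrow> u' \<in> Y \<Longrightarrow> \<bar>u - u'\<bar> \<le> d"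
  shows "\<exists>I. I \<in> sets borel \<and> Y \<subseteq> I \<and> emeasure lborel I \<le> ennreal (2 * d)"
proof (cases "Y = {}")
  case True then show ?thesis by (intro exI[of _ "{}"]) auto
next
  case False
  then obtain u0 where u0: "u0 \<in> Y" by auto
  have "Y \<subseteq> {u0 - d .. u0 + d}" using assms(2)[OF u0] by (force simp: abs_le_iff)
  moreover have "emeasure lborel {u0 - d .. u0 + d} = ennreal (2 * d)" using assms(1) by simp
  ultimately show ?thesis by (intro exI[of _ "{u0 - d .. u0 + d}"]) auto
qed

lemma diam_measure:
  fixes Y :: "real set"
  assumes "d \<ge> 0" "\<And>u u'. u \<in> Y \<Longrightarrow> u' \<in> Y \<Longrightarrow> \<bar>u - u'\<bar> \<le> d"
  shows "emeasure lborel Y \<le> ennreal (2 * d)"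
proof -
  obtain I where "I \<in> sets borel" "Y \<subseteq> I" "emeasure lborel I \<le> ennreal (2 * d)"
    using diam_cover[OF assms] by blast
  then show ?thesis by (metis emeasure_mono order_trans sets_lborel)
qed

lemma two_halves:
  fixes X :: "real set"
  assumes d: "d \<ge> 0" and h: "\<And>u u'. u \<in> X \<Longrightarrow> u' \<in> X \<Longrightarrow> (0 < u \<longleftrightarrow> 0 < u') \<Longrightarrow> \<bar>u - u'\<bar> \<le> d"
  shows "emeasure lborel X \<le> ennreal (4 * d)"
proof -
  obtain I1 where I1: "I1 \<in> sets borel" "X \<inter> {0<..} \<subseteq> I1" "emeasure lborel I1 \<le> ennreal (2 * d)"
    using diam_cover[OF d, of "X \<inter> {0<..}"] h by auto
  obtain I2 where I2: "I2 \<in> sets borel" "X \<inter> {..0} \<subseteq> I2" "emeasure lborel I2 \<le> ennreal (2 * d)"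
    using diam_cover[OF d, of "X \<inter> {..0}"] h by (auto simp: not_less[symmetric])
  have "X \<subseteq> I1 \<union> I2"
  proof
    fix x assume "x \<in> X" then show "x \<in> I1 \<union> I2" using I1(2) I2(2) by (cases "0 < x") auto
  qed
  then have "emeasure lborel X \<le> emeasure lborel (I1 \<union> I2)"
    using I1 I2 by (intro emeasure_mono) auto
  also have "\<dots> \<le> emeasure lborel I1 + emeasure lborel I2"
    using I1 I2 by (intro emeasure_subadditive) auto
  also have "\<dots> \<le> ennreal (2 * d) + ennreal (2 * d)" using I1 I2 by (intro add_mono) auto
  also have "\<dots> = ennreal (4 * d)" using d by (simp flip: ennreal_plus)
  finally show ?thesis .
qed

lemma rot_bound:
  fixes P :: "(real \<times> real) set" and c s c1 d :: real
  assumes cs: "c\<^sup>2 + s\<^sup>2 = 1" and P[measurable]: "P \<in> sets borel" and d: "d \<ge> 0" and c1: "c1 \<ge> 0"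
    and ty: "\<And>x. x \<in> P \<Longrightarrow> \<bar>snd x * c - fst x * s\<bar> \<le> c1"
    and sec: "\<And>u u' v. (c * u - s * v, s * u + c * v) \<in> P \<Longrightarrow> (c * u' - s * v, s * u' + c * v) \<in> P
                 \<Longrightarrow> (0 < u \<longleftrightarrow> 0 < u') \<Longrightarrow> \<bar>u - u'\<bar> \<le> d"
  shows "emeasure lborel P \<le> ennreal (8 * c1 * d)"
proof -
  define R where "R = (\<lambda>(u,v). (c * u - s * v, s * u + c * v :: real))"
  have Rm: "R \<in> borel_measurable borel" unfolding R_def using lin2_measurable[of c "-s" s c] by simp
  have RP: "R -` P \<in> sets (lborel \<Otimes>\<^sub>M lborel)"
    using measurable_sets[OF Rm P] unfolding lborel_prod by simp
  have "emeasure lborel P = emeasure (distr lborel borel R) P"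
    unfolding R_def by (simp add: lborel_rotation[OF cs])
  also have "\<dots> = emeasure lborel (R -` P)"
    using Rm by (subst emeasure_distr) auto
  also have "\<dots> = emeasure (lborel \<Otimes>\<^sub>M lborel) (R -` P)" by (simp add: lborel_prod)
  also have "\<dots> = (\<integral>\<^sup>+v. emeasure lborel ((\<lambda>u. (u, v)) -` (R -` P)) \<partial>lborel)"
    by (rule lborel_pair.emeasure_pair_measure_alt2[OF RP])
  also have "\<dots> \<le> (\<integral>\<^sup>+v. ennreal (4 * d) * indicator {-c1..c1} v \<partial>lborel)"
  proof (intro nn_integral_mono)
    fix v :: real
    show "emeasure lborel ((\<lambda>u. (u, v)) -` (R -` P)) \<le> ennreal (4 * d) * indicator {-c1..c1} v"
    proof (cases "\<bar>v\<bar> \<le> c1")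
      case True
      have "emeasure lborel ((\<lambda>u. (u, v)) -` (R -` P)) \<le> ennreal (4 * d)"
        by (rule two_halves[OF d]) (auto simp: R_def intro: sec)
      then show ?thesis using True by (simp add: indicator_def abs_le_iff)
    next
      case False
      have "(\<lambda>u. (u, v)) -` (R -` P) = {}"
      proof (rule equals0I)
        fix u assume "u \<in> (\<lambda>u. (u, v)) -` (R -` P)"
        then have "(c * u - s * v, s * u + c * v) \<in> P" by (simp add: R_def)
        from ty[OF this] have "\<bar>(s * u + c * v) * c - (c * u - s * v) * s\<bar> \<le> c1" by simp
        moreover have "(s * u + c * v) * c - (c * u - s * v) * s = v * (c\<^sup>2 + s\<^sup>2)"
          by (simp add: algebra_simps power2_eq_square)
        ultimately show False using False cs by simp
      qed
      then show ?thesis by simp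
    qed
  qed
  also have "\<dots> = ennreal (4 * d) * emeasure lborel {-c1..c1}"
    by (rule nn_integral_cmult_indicator) simp
  also have "\<dots> = ennreal (8 * c1 * d)"
    using c1 d by (simp add: ennreal_mult[symmetric] algebra_simps)
  finally show ?thesis .
qed

lemma fiber_bound:
  fixes E :: "((real \<times> real) \<times> real) set" and P :: "(real \<times> real) set"
  assumes E: "E \<in> sets borel" and P[measurable]: "P \<in> sets borel" and l: "l \<ge> 0"
    and proj: "\<And>x t. (x,t) \<in> E \<Longrightarrow> x \<in> P"
    and fib: "\<And>x t t'. (x,t) \<in> E \<Longrightarrow> (x,t') \<in> E \<Longrightarrow> \<bar>t - t'\<bar> \<le> l"
  shows "emeasure lborel E \<le> ennreal (2 * l) * emeasure lborel P"
proof -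
  have E': "E \<in> sets (lborel \<Otimes>\<^sub>M lborel)" using E unfolding lborel_prod by simp
  have "emeasure lborel E = emeasure (lborel \<Otimes>\<^sub>M lborel) E" by (simp add: lborel_prod)
  also have "\<dots> = (\<integral>\<^sup>+x. emeasure lborel (Pair x -` E) \<partial>lborel)"
    by (rule lborel.emeasure_pair_measure_alt[OF E'])
  also have "\<dots> \<le> (\<integral>\<^sup>+x. ennreal (2 * l) * indicator P x \<partial>lborel)"
  proof (intro nn_integral_mono)
    fix x
    show "emeasure lborel (Pair x -` E) \<le> ennreal (2 * l) * indicator P x"
    proof (cases "x \<in> P")
      case True
      have "emeasure lborel (Pair x -` E) \<le> ennreal (2 * l)"
        by (rule diam_measure[OF l]) (auto intro: fib)
      then show ?thesis using True by simp
    next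
      case False
      then have "Pair x -` E = {}" using proj by auto
      then show ?thesis by simp
    qed
  qed
  also have "\<dots> = ennreal (2 * l) * emeasure lborel P"
    by (rule nn_integral_cmult_indicator) simp
  finally show ?thesis .
qed

lemma xnorm_norm: "xnorm x = norm x"
  by (cases x) (simp add: xnorm_def norm_Pair)

lemma xnorm_sq: "(xnorm x)\<^sup>2 = (fst x)\<^sup>2 + (snd x)\<^sup>2"
  by (simp add: xnorm_def)

lemma rot_coords:
  fixes c s u v :: real
  assumes cs: "c\<^sup>2 + s\<^sup>2 = 1"
  shows "snd (c * u - s * v, s * u + c * v) * c - fst (c * u - s * v, s * u + c * v) * s = v"
    and "fst (c * u - s * v, s * u + c * v) * c + snd (c * u - s * v, s * u + c * v) * s = u"
    and "(xnorm (c * u - s * v, s * u + c * v))\<^sup>2 = u\<^sup>2 + v\<^sup>2"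
proof -
  have "(s * u + c * v) * c - (c * u - s * v) * s = v * (c\<^sup>2 + s\<^sup>2)" by (simp add: algebra_simps power2_eq_square)
  then show "snd (c * u - s * v, s * u + c * v) * c - fst (c * u - s * v, s * u + c * v) * s = v" using cs by simp
  have "(c * u - s * v) * c + (s * u + c * v) * s = u * (c\<^sup>2 + s\<^sup>2)" by (simp add: algebra_simps power2_eq_square)
  then show "fst (c * u - s * v, s * u + c * v) * c + snd (c * u - s * v, s * u + c * v) * s = u" using cs by simp
  have "(c * u - s * v)\<^sup>2 + (s * u + c * v)\<^sup>2 = (u\<^sup>2 + v\<^sup>2) * (c\<^sup>2 + s\<^sup>2)" by (simp add: algebra_simps power2_eq_square)
  then show "(xnorm (c * u - s * v, s * u + c * v))\<^sup>2 = u\<^sup>2 + v\<^sup>2" using cs by (simp add: xnorm_sq)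
qed

lemma rx_ty_sq:
  fixes c s :: real
  assumes cs: "c\<^sup>2 + s\<^sup>2 = 1"
  shows "(fst x * c + snd x * s)\<^sup>2 + (snd x * c - fst x * s)\<^sup>2 = (xnorm x)\<^sup>2"
proof -
  have "(fst x * c + snd x * s)\<^sup>2 + (snd x * c - fst x * s)\<^sup>2 = ((fst x)\<^sup>2 + (snd x)\<^sup>2) * (c\<^sup>2 + s\<^sup>2)"
    by (simp add: algebra_simps power2_eq_square)
  then show ?thesis using cs by (simp add: xnorm_sq)
qed

lemma P1_bound:
  fixes xi :: "real \<times> real" and c s c1 t delta R :: real
  assumes cs: "c\<^sup>2 + s\<^sup>2 = 1" and c1: "c1 \<ge> 0" and delta: "delta \<ge> 0" and R: "R > 0" "8 * c1 \<le> R"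
    and xi: "R \<le> xnorm xi"
  shows "emeasure lborel {eta. \<bar>snd eta * c - fst eta * s\<bar> \<le> c1
            \<and> \<bar>snd (xi + eta) * c - fst (xi + eta) * s\<bar> \<le> c1
            \<and> \<bar>t + 2 * (fst xi * fst eta + snd xi * snd eta)\<bar> \<le> delta}
         \<le> ennreal (16 * c1 * delta / R)"
proof -
  define P where "P = {eta. \<bar>snd eta * c - fst eta * s\<bar> \<le> c1
            \<and> \<bar>snd (xi + eta) * c - fst (xi + eta) * s\<bar> \<le> c1
            \<and> \<bar>t + 2 * (fst xi * fst eta + snd xi * snd eta)\<bar> \<le> delta}"
  have Pm: "P \<in> sets borel"
  proof -
    have "P = {eta \<in> space (borel \<Otimes>\<^sub>M borel). \<bar>snd eta * c - fst eta * s\<bar> \<le> c1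
            \<and> \<bar>(snd xi + snd eta) * c - (fst xi + fst eta) * s\<bar> \<le> c1
            \<and> \<bar>t + 2 * (fst xi * fst eta + snd xi * snd eta)\<bar> \<le> delta}"
      by (auto simp: P_def space_pair_measure)
    also have "\<dots> \<in> sets (borel \<Otimes>\<^sub>M borel)" by measurable
    finally show ?thesis unfolding borel_prod .
  qed
  have "emeasure lborel P \<le> ennreal (8 * c1 * (2 * delta / R))"
  proof (rule rot_bound[OF cs Pm _ c1])
    show "0 \<le> 2 * delta / R" using delta R by simp
    show "\<bar>snd x * c - fst x * s\<bar> \<le> c1" if "x \<in> P" for x using that by (simp add: P_def)
    fix u u' v
    assume A: "(c * u - s * v, s * u + c * v) \<in> P" and B: "(c * u' - s * v, s * u' + c * v) \<in> P"
    define eta where "eta = (c * u - s * v, s * u + c * v)"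
    define eta' where "eta' = (c * u' - s * v, s * u' + c * v)"
    have tyxi: "\<bar>snd xi * c - fst xi * s\<bar> \<le> 2 * c1"
    proof -
      have "snd xi * c - fst xi * s = (snd (xi + eta) * c - fst (xi + eta) * s) - (snd eta * c - fst eta * s)"
        by (simp add: algebra_simps)
      then show ?thesis using A unfolding P_def eta_def[symmetric] by auto
    qed
    define r where "r = fst xi * c + snd xi * s"
    have "r\<^sup>2 + (snd xi * c - fst xi * s)\<^sup>2 = (xnorm xi)\<^sup>2" unfolding r_def by (rule rx_ty_sq[OF cs])
    moreover have "(snd xi * c - fst xi * s)\<^sup>2 \<le> (2 * c1)\<^sup>2"
      using tyxi by (metis abs_ge_zero power2_abs power_mono)
    moreover have "R\<^sup>2 \<le> (xnorm xi)\<^sup>2" using xi R by (intro power_mono) auto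
    ultimately have "r\<^sup>2 \<ge> R\<^sup>2 - 4 * c1\<^sup>2" by (simp add: power2_eq_square)
    moreover have "4 * c1\<^sup>2 \<le> 3/4 * R\<^sup>2"
    proof -
      have "(8 * c1)\<^sup>2 \<le> R\<^sup>2" using R c1 by (intro power_mono) auto
      moreover have "0 \<le> R * R" by simp
      ultimately show ?thesis unfolding power2_eq_square by linarith
    qed
    ultimately have "(R/2)\<^sup>2 \<le> \<bar>r\<bar>\<^sup>2" by (simp add: power2_eq_square)
    then have rR: "R/2 \<le> \<bar>r\<bar>" using R by (metis abs_ge_zero power2_le_imp_le)
    have "fst xi * fst eta + snd xi * snd eta - (fst xi * fst eta' + snd xi * snd eta') = (u - u') * r"
      unfolding eta_def eta'_def r_def by (simp add: algebra_simps)
    moreover have "\<bar>t + 2 * (fst xi * fst eta + snd xi * snd eta)\<bar> \<le> delta"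
      "\<bar>t + 2 * (fst xi * fst eta' + snd xi * snd eta')\<bar> \<le> delta"
      using A B unfolding P_def eta_def eta'_def by auto
    ultimately have "\<bar>2 * ((u - u') * r)\<bar> \<le> 2 * delta" by (smt (verit))
    then have "\<bar>u - u'\<bar> * \<bar>r\<bar> \<le> delta" by (simp add: abs_mult)
    then have "\<bar>u - u'\<bar> * (R/2) \<le> delta"
      by (meson abs_ge_zero mult_left_mono order_trans rR)
    then show "\<bar>u - u'\<bar> \<le> 2 * delta / R" using R by (simp add: field_simps)
  qed
  also have "8 * c1 * (2 * delta / R) = 16 * c1 * delta / R" by simp
  finally show ?thesis unfolding P_def .
qed

lemma P2_bound:
  fixes p :: "real \<times> real" and c s c1 t delta R s' :: real
  assumes cs: "c\<^sup>2 + s\<^sup>2 = 1" and c1: "c1 \<ge> 0" and delta: "delta \<ge> 0" and R: "R \<ge> 8" "8 * c1 \<le> R"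
    and s': "\<bar>s'\<bar> \<le> 1"
  shows "emeasure lborel {eta. \<bar>snd eta * c - fst eta * s\<bar> \<le> c1 \<and> R/2 \<le> xnorm eta
            \<and> \<bar>t + (xnorm eta)\<^sup>2 + s' * xnorm (p - eta)\<bar> \<le> delta}
         \<le> ennreal (64 * c1 * delta / R)"
proof -
  define P where "P = {eta. \<bar>snd eta * c - fst eta * s\<bar> \<le> c1 \<and> R/2 \<le> xnorm eta
            \<and> \<bar>t + (xnorm eta)\<^sup>2 + s' * xnorm (p - eta)\<bar> \<le> delta}"
  have Pm: "P \<in> sets borel"
  proof -
    have "P = {eta \<in> space (borel \<Otimes>\<^sub>M borel). \<bar>snd eta * c - fst eta * s\<bar> \<le> c1
            \<and> R/2 \<le> sqrt ((fst eta)\<^sup>2 + (snd eta)\<^sup>2)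
            \<and> \<bar>t + (sqrt ((fst eta)\<^sup>2 + (snd eta)\<^sup>2))\<^sup>2 + s' * sqrt ((fst p - fst eta)\<^sup>2 + (snd p - snd eta)\<^sup>2)\<bar> \<le> delta}"
      by (auto simp: P_def space_pair_measure xnorm_def)
    also have "\<dots> \<in> sets (borel \<Otimes>\<^sub>M borel)" by measurable
    finally show ?thesis unfolding borel_prod .
  qed
  have "emeasure lborel P \<le> ennreal (8 * c1 * (8 * delta / R))"
  proof (rule rot_bound[OF cs Pm _ c1])
    show "0 \<le> 8 * delta / R" using delta R by simp
    show "\<bar>snd x * c - fst x * s\<bar> \<le> c1" if "x \<in> P" for x using that by (simp add: P_def)
    fix u u' v
    assume A: "(c * u - s * v, s * u + c * v) \<in> P" and B: "(c * u' - s * v, s * u' + c * v) \<in> P"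
      and sg: "(0 < u) = (0 < u')"
    define eta where "eta = (c * u - s * v, s * u + c * v)"
    define eta' where "eta' = (c * u' - s * v, s * u' + c * v)"
    have v: "\<bar>v\<bar> \<le> c1" using A rot_coords(1)[OF cs, of u v] unfolding P_def by auto
    have big: "R/4 \<le> \<bar>w\<bar>" if "(c * w - s * v, s * w + c * v) \<in> P" for w
    proof -
      have "R/2 \<le> xnorm (c * w - s * v, s * w + c * v)" using that unfolding P_def by auto
      then have "(R/2)\<^sup>2 \<le> (xnorm (c * w - s * v, s * w + c * v))\<^sup>2" using R by (intro power_mono) auto
      then have "(R/2)\<^sup>2 \<le> w\<^sup>2 + v\<^sup>2" using rot_coords(3)[OF cs] by simp
      moreover have "v\<^sup>2 \<le> c1\<^sup>2" using v by (metis abs_ge_zero power2_abs power_mono)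
      moreover have "(8 * c1)\<^sup>2 \<le> R\<^sup>2" using R c1 by (intro power_mono) auto
      ultimately have f: "R * R \<le> 4 * (w * w) + 4 * (v * v)" "v * v \<le> c1 * c1" "64 * (c1 * c1) \<le> R * R"
        unfolding power2_eq_square by (auto simp: field_simps)
      from f zero_le_square[of w] have "R * R \<le> 16 * (w * w)" by linarith
      then have "(R/4)\<^sup>2 \<le> \<bar>w\<bar>\<^sup>2" by (simp add: power2_eq_square)
      then show ?thesis using R by (metis abs_ge_zero power2_le_imp_le)
    qed
    have uu: "R/2 \<le> \<bar>u + u'\<bar>" using big[OF A] big[OF B] sg R by (cases "0 < u") auto
    have n1: "(xnorm eta)\<^sup>2 - (xnorm eta')\<^sup>2 = (u - u') * (u + u')"
      unfolding eta_def eta'_def rot_coords(3)[OF cs] by (simp add: algebra_simps power2_eq_square)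
    have n2: "\<bar>xnorm (p - eta) - xnorm (p - eta')\<bar> \<le> \<bar>u - u'\<bar>"
    proof -
      have "\<bar>xnorm (p - eta) - xnorm (p - eta')\<bar> \<le> xnorm ((p - eta) - (p - eta'))"
        unfolding xnorm_norm by (rule norm_triangle_ineq3)
      also have "(p - eta) - (p - eta') = (c * (u' - u) - s * 0, s * (u' - u) + c * 0)"
        unfolding eta_def eta'_def by (simp add: algebra_simps)
      also have "xnorm \<dots> = \<bar>u' - u\<bar>"
      proof (rule power2_eq_imp_eq)
        show "(xnorm (c * (u' - u) - s * 0, s * (u' - u) + c * 0))\<^sup>2 = \<bar>u' - u\<bar>\<^sup>2"
          using rot_coords(3)[OF cs, of "u' - u" 0] by simp
      qed (auto simp: xnorm_def)
      finally show ?thesis by (simp add: abs_minus_commute)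
    qed
    have h1: "\<bar>t + (xnorm eta)\<^sup>2 + s' * xnorm (p - eta)\<bar> \<le> delta"
      and h2: "\<bar>t + (xnorm eta')\<^sup>2 + s' * xnorm (p - eta')\<bar> \<le> delta"
      using A B unfolding P_def eta_def eta'_def by auto
    have "\<bar>s' * (xnorm (p - eta) - xnorm (p - eta'))\<bar> \<le> \<bar>u - u'\<bar>"
    proof -
      have "\<bar>s' * (xnorm (p - eta) - xnorm (p - eta'))\<bar> = \<bar>s'\<bar> * \<bar>xnorm (p - eta) - xnorm (p - eta')\<bar>" by (simp add: abs_mult)
      also have "\<dots> \<le> 1 * \<bar>u - u'\<bar>" using s' n2 by (intro mult_mono) auto
      finally show ?thesis by simp
    qed
    then have Dle: "\<bar>s' * (xnorm (p - eta) - xnorm (p - eta'))\<bar> \<le> \<bar>u - u'\<bar>" .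
    define X where "X = (xnorm eta)\<^sup>2 - (xnorm eta')\<^sup>2"
    define D where "D = s' * (xnorm (p - eta) - xnorm (p - eta'))"
    have "(t + (xnorm eta)\<^sup>2 + s' * xnorm (p - eta)) - (t + (xnorm eta')\<^sup>2 + s' * xnorm (p - eta')) = X + D"
      unfolding X_def D_def by (simp add: algebra_simps)
    with h1 h2 have "\<bar>X + D\<bar> \<le> 2 * delta" by linarith
    with Dle have "\<bar>X\<bar> \<le> 2 * delta + \<bar>u - u'\<bar>" unfolding D_def[symmetric] by linarith
    then have "\<bar>(u - u') * (u + u')\<bar> \<le> 2 * delta + \<bar>u - u'\<bar>" unfolding X_def n1 .
    then have "\<bar>u - u'\<bar> * \<bar>u + u'\<bar> \<le> 2 * delta + \<bar>u - u'\<bar>" by (simp add: abs_mult)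
    moreover have "\<bar>u - u'\<bar> * (R/2) \<le> \<bar>u - u'\<bar> * \<bar>u + u'\<bar>" using uu by (intro mult_left_mono) auto
    ultimately have "\<bar>u - u'\<bar> * (R/2 - 1) \<le> 2 * delta" by (simp add: algebra_simps)
    moreover have "\<bar>u - u'\<bar> * (R/4) \<le> \<bar>u - u'\<bar> * (R/2 - 1)" using R by (intro mult_left_mono) auto
    ultimately have "\<bar>u - u'\<bar> * (R/4) \<le> 2 * delta" by linarith
    then show "\<bar>u - u'\<bar> \<le> 8 * delta / R" using R by (simp add: field_simps)
  qed
  also have "8 * c1 * (8 * delta / R) = 64 * c1 * delta / R" by simp
  finally show ?thesis unfolding P_def .
qed

lemma sector_ty:
  fixes z :: pt and A j j1 :: nat
  assumes z: "z \<in> QQ A j" and A: "A > 0" and jj: "\<bar>int j - int j1\<bar> \<le> 16"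
  shows "\<bar>snd (fst z) * cos (pi * real j1 / real A) - fst (fst z) * sin (pi * real j1 / real A)\<bar>
           \<le> xnorm (fst z) * (18 * pi / real A)"
proof -
  define phi where "phi = pi * real j1 / real A"
  define r where "r = xnorm (fst z)"
  have r0: "r \<ge> 0" by (simp add: r_def xnorm_def)
  obtain th where th: "th \<in> Theta A j" and e1: "fst (fst z) = r * cos th" and e2: "snd (fst z) = r * sin th"
    using z unfolding QQ_def r_def by auto
  have ty: "snd (fst z) * cos phi - fst (fst z) * sin phi = r * sin (th - phi)"
    unfolding e1 e2 sin_diff by (simp add: algebra_simps)
  have jj': "\<bar>real j - real j1\<bar> \<le> 16" using jj by linarith
  have key: "\<bar>sin (x - phi)\<bar> \<le> 18 * pi / real A"
    if x: "pi / real A * (real j - 2) \<le> x" "x \<le> pi / real A * (real j + 2)" for x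
  proof -
    have ph: "phi = pi / real A * real j1" by (simp add: phi_def)
    have e3: "pi / real A * (real j - real j1 + 2) = pi / real A * (real j + 2) - pi / real A * real j1"
      "pi / real A * (real j - real j1 - 2) = pi / real A * (real j - 2) - pi / real A * real j1"
      by (simp_all add: algebra_simps)
    have "x - phi \<le> pi / real A * (real j - real j1 + 2)" using x(2) unfolding e3 ph by linarith
    also have "\<dots> \<le> pi / real A * 18" using jj' A by (intro mult_left_mono) auto
    finally have u: "x - phi \<le> 18 * pi / real A" by (simp add: mult.commute)
    have "pi / real A * (-18) \<le> pi / real A * (real j - real j1 - 2)" using jj' A by (intro mult_left_mono) auto
    also have "\<dots> \<le> x - phi" using x(1) unfolding e3 ph by linarith
    finally have l: "- (18 * pi / real A) \<le> x - phi" by (simp add: mult.commute)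
    have "\<bar>sin (x - phi)\<bar> \<le> \<bar>x - phi\<bar>" by (rule abs_sin_x_le_abs_x)
    also have "\<dots> \<le> 18 * pi / real A" using u l by linarith
    finally show ?thesis .
  qed
  have s: "\<bar>sin (th - phi)\<bar> \<le> 18 * pi / real A"
  proof -
    from th consider "pi / real A * (real j - 2) \<le> th \<and> th \<le> pi / real A * (real j + 2)"
      | "- pi + pi / real A * (real j - 2) \<le> th \<and> th \<le> - pi + pi / real A * (real j + 2)"
      unfolding Theta_def by auto
    then show ?thesis
    proof cases
      case 1 then show ?thesis using key by auto
    next
      case 2
      have "sin (th - phi) = - sin ((th + pi) - phi)"
        using sin_minus_pi[of "(th + pi) - phi"] by (simp add: algebra_simps)
      then show ?thesis using key[of "th + pi"] 2 by auto
    qed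
  qed
  have "\<bar>r * sin (th - phi)\<bar> = r * \<bar>sin (th - phi)\<bar>" using r0 by (simp add: abs_mult)
  also have "\<dots> \<le> r * (18 * pi / real A)" using s r0 by (intro mult_left_mono) auto
  finally show ?thesis using ty unfolding phi_def r_def by simp
qed

lemma powr12: "0 < x \<Longrightarrow> (x powr (5/12)) ^ 12 = (x::real) ^ 5"
  by (simp add: powr_power powr_numeral)

lemma powr4: "0 < x \<Longrightarrow> (x powr (1/4)) ^ 12 = (x::real) ^ 3"
  by (simp add: powr_power powr_numeral)

lemma sqrt12: "0 \<le> x \<Longrightarrow> (sqrt x) ^ 12 = (x::real) ^ 6"
proof -
  assume "0 \<le> x"
  have "((sqrt x)\<^sup>2) ^ 6 = (sqrt x) ^ 12" by (simp add: power_mult[symmetric])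
  then show ?thesis using \<open>0 \<le> x\<close> by simp
qed

lemma final_alg:
  fixes I D1 K N N1 N2 L L1 L2 :: real
  assumes I: "I \<ge> 0" and D1: "D1 > 0" and K: "K \<ge> 1"
    and N: "N > 0" "N1 > 0" "N2 > 0" "N \<le> K * N1" "N1 \<le> K * N2"
    and L: "L \<ge> 1" "L1 \<ge> 1" "L2 \<ge> 1"
    and I1: "I \<le> sqrt (D1 * L1 * L2 / N)"
    and I2: "I \<le> sqrt (2 * D1 * L * L2 / N2)"
    and I3: "I \<le> sqrt (2 * D1 * L * L1 / N1)"
  shows "I \<le> ((4 * D1 ^ 3)\<^sup>2 * K ^ 3 + 1) * L1 powr (5/12) * L2 powr (5/12) * L powr (5/12)
              * (1 / sqrt N) * (N / N1) powr (1/4)"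
proof -
  define D where "D = 4 * D1 ^ 3"
  define C where "C = D\<^sup>2 * K ^ 3 + 1"
  define P where "P = L * L1 * L2"
  have "1 * 1 * 1 \<le> L * L1 * L2" using L by (intro mult_mono) auto
  then have P1: "P \<ge> 1" unfolding P_def by simp
  have D0: "D > 0" unfolding D_def using D1 by simp
  have C1: "C \<ge> 1" unfolding C_def using K D0 by simp
  have sq: "I\<^sup>2 \<le> m" if "I \<le> sqrt m" "m \<ge> 0" for m
    using that I by (metis power_mono real_sqrt_pow2)
  have i1: "I\<^sup>2 \<le> D1 * L1 * L2 / N" using sq[OF I1] D1 L N by simp
  have i2: "I\<^sup>2 \<le> 2 * D1 * L * L2 / N2" using sq[OF I2] D1 L N by simp
  have i3: "I\<^sup>2 \<le> 2 * D1 * L * L1 / N1" using sq[OF I3] D1 L N by simp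
  have "I ^ 6 = I\<^sup>2 * I\<^sup>2 * I\<^sup>2" by (simp flip: power_add)
  also have "\<dots> \<le> (D1 * L1 * L2 / N) * (2 * D1 * L * L2 / N2) * (2 * D1 * L * L1 / N1)"
    by (intro mult_mono i1 i2 i3) (use D1 L N in auto)
  also have "\<dots> = D * P\<^sup>2 / (N * N1 * N2)"
    unfolding D_def P_def by (simp add: field_simps power2_eq_square power3_eq_cube)
  finally have i6: "I ^ 6 \<le> D * P\<^sup>2 / (N * N1 * N2)" .
  have "I ^ 12 = (I ^ 6)\<^sup>2" by (simp flip: power_mult)
  also have "\<dots> \<le> (D * P\<^sup>2 / (N * N1 * N2))\<^sup>2" using i6 I by (intro power_mono) auto
  also have "\<dots> \<le> C ^ 12 * P ^ 5 / (N ^ 3 * N1 ^ 3)"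
  proof -
    have NN: "N * N1 \<le> K ^ 3 * N2\<^sup>2"
    proof -
      have "N * N1 \<le> (K * N1) * N1" using N by (intro mult_right_mono) auto
      also have "\<dots> = K * N1\<^sup>2" by (simp add: power2_eq_square)
      also have "\<dots> \<le> K * (K * N2)\<^sup>2" using N K by (intro mult_left_mono power_mono) auto
      also have "\<dots> = K ^ 3 * N2\<^sup>2" by (simp add: power2_eq_square power3_eq_cube)
      finally show ?thesis .
    qed
    have CC: "D\<^sup>2 * K ^ 3 \<le> C ^ 12"
    proof -
      have "D\<^sup>2 * K ^ 3 \<le> C" unfolding C_def by simp
      also have "C \<le> C ^ 12" using C1 by (simp add: power_increasing[of 1 12 C, simplified])
      finally show ?thesis .
    qed
    have "D\<^sup>2 * (N * N1) \<le> D\<^sup>2 * (K ^ 3 * N2\<^sup>2)" using NN by (intro mult_left_mono) auto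
    also have "\<dots> = (D\<^sup>2 * K ^ 3) * N2\<^sup>2" by simp
    also have "\<dots> \<le> C ^ 12 * N2\<^sup>2" using CC by (intro mult_right_mono) auto
    also have "\<dots> \<le> C ^ 12 * N2\<^sup>2 * P" using mult_left_mono[OF P1, of "C ^ 12 * N2\<^sup>2"] C1 by simp
    finally have key: "D\<^sup>2 * (N * N1) \<le> C ^ 12 * N2\<^sup>2 * P" .
    have p4: "P ^ 4 = P * (P * (P * P))" by (simp add: power_numeral_reduce)
    have "(D * P\<^sup>2 / (N * N1 * N2))\<^sup>2 = (D\<^sup>2 * (N * N1)) * P ^ 4 / (N ^ 3 * N1 ^ 3 * N2\<^sup>2)"
      using N unfolding p4 by (simp add: field_simps power2_eq_square power3_eq_cube)
    also have "\<dots> \<le> (C ^ 12 * N2\<^sup>2 * P) * P ^ 4 / (N ^ 3 * N1 ^ 3 * N2\<^sup>2)"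
      using key N P1 by (intro divide_right_mono mult_right_mono) auto
    also have "\<dots> = C ^ 12 * P ^ 5 / (N ^ 3 * N1 ^ 3)"
      using N by (simp add: field_simps power2_eq_square power3_eq_cube power_numeral_reduce)
    finally show ?thesis .
  qed
  also have "\<dots> = (C * L1 powr (5/12) * L2 powr (5/12) * L powr (5/12) * (1 / sqrt N) * (N / N1) powr (1/4)) ^ 12"
  proof -
    have "(C * L1 powr (5/12) * L2 powr (5/12) * L powr (5/12) * (1 / sqrt N) * (N / N1) powr (1/4)) ^ 12
        = C ^ 12 * L1 ^ 5 * L2 ^ 5 * L ^ 5 * (1 / N ^ 6) * (N / N1) ^ 3"
    proof -
      have a: "(1 / sqrt N) ^ 12 = 1 / N ^ 6" using N by (simp add: power_one_over sqrt12)
      have b: "((N / N1) powr (1/4)) ^ 12 = (N / N1) ^ 3" using N by (intro powr4) simp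
      show ?thesis unfolding power_mult_distrib a b
        using L by (simp add: powr12)
    qed
    also have "\<dots> = C ^ 12 * P ^ 5 / (N ^ 3 * N1 ^ 3)"
      unfolding P_def using N by (simp add: field_simps power_mult_distrib)
    finally show ?thesis by simp
  qed
  finally have "I ^ 12 \<le> (C * L1 powr (5/12) * L2 powr (5/12) * L powr (5/12) * (1 / sqrt N) * (N / N1) powr (1/4)) ^ 12" .
  have "I \<le> C * L1 powr (5/12) * L2 powr (5/12) * L powr (5/12) * (1 / sqrt N) * (N / N1) powr (1/4)"
  proof (rule power_le_imp_le_base[where n=11])
    show "I ^ Suc 11 \<le> (C * L1 powr (5/12) * L2 powr (5/12) * L powr (5/12) * (1 / sqrt N) * (N / N1) powr (1/4)) ^ Suc 11"
      using \<open>I ^ 12 \<le> _\<close> by (simp del: power_Suc)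
  qed (use C1 N in simp)
  then show ?thesis unfolding C_def D_def .
qed

lemma P1_sets:
  fixes xi :: "real \<times> real"
  shows "{eta. \<bar>snd eta * c - fst eta * s\<bar> \<le> c1
            \<and> \<bar>snd (xi + eta) * c - fst (xi + eta) * s\<bar> \<le> c1
            \<and> \<bar>t + 2 * (fst xi * fst eta + snd xi * snd eta)\<bar> \<le> delta} \<in> sets borel"
proof -
  have "{eta. \<bar>snd eta * c - fst eta * s\<bar> \<le> c1
            \<and> \<bar>snd (xi + eta) * c - fst (xi + eta) * s\<bar> \<le> c1
            \<and> \<bar>t + 2 * (fst xi * fst eta + snd xi * snd eta)\<bar> \<le> delta}
       = {eta \<in> space (borel \<Otimes>\<^sub>M borel). \<bar>snd eta * c - fst eta * s\<bar> \<le> c1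
            \<and> \<bar>(snd xi + snd eta) * c - (fst xi + fst eta) * s\<bar> \<le> c1
            \<and> \<bar>t + 2 * (fst xi * fst eta + snd xi * snd eta)\<bar> \<le> delta}"
    by (auto simp: space_pair_measure)
  also have "\<dots> \<in> sets (borel \<Otimes>\<^sub>M borel)" by measurable
  finally show ?thesis unfolding borel_prod .
qed

lemma P2_sets:
  fixes p :: "real \<times> real"
  shows "{eta. \<bar>snd eta * c - fst eta * s\<bar> \<le> c1 \<and> R/2 \<le> xnorm eta
            \<and> \<bar>t + (xnorm eta)\<^sup>2 + s' * xnorm (p - eta)\<bar> \<le> delta} \<in> sets borel"
proof -
  have "{eta. \<bar>snd eta * c - fst eta * s\<bar> \<le> c1 \<and> R/2 \<le> xnorm eta
            \<and> \<bar>t + (xnorm eta)\<^sup>2 + s' * xnorm (p - eta)\<bar> \<le> delta}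
      = {eta \<in> space (borel \<Otimes>\<^sub>M borel). \<bar>snd eta * c - fst eta * s\<bar> \<le> c1
            \<and> R/2 \<le> sqrt ((fst eta)\<^sup>2 + (snd eta)\<^sup>2)
            \<and> \<bar>t + (sqrt ((fst eta)\<^sup>2 + (snd eta)\<^sup>2))\<^sup>2 + s' * sqrt ((fst p - fst eta)\<^sup>2 + (snd p - snd eta)\<^sup>2)\<bar> \<le> delta}"
    by (auto simp: space_pair_measure xnorm_def)
  also have "\<dots> \<in> sets (borel \<Otimes>\<^sub>M borel)" by measurable
  finally show ?thesis unfolding borel_prod .
qed

lemma emeasure_chain:
  assumes "emeasure lborel E \<le> ennreal (2 * l) * emeasure lborel P" "emeasure lborel P \<le> ennreal B"
    "l \<ge> 0" "B \<ge> 0" "2 * l * B \<le> M"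
  shows "emeasure lborel E \<le> ennreal M"
proof -
  have "emeasure lborel E \<le> ennreal (2 * l) * ennreal B"
    using assms(1,2) by (meson mult_left_mono order_trans zero_le)
  also have "\<dots> = ennreal (2 * l * B)" using assms(3,4) by (simp add: ennreal_mult)
  also have "\<dots> \<le> ennreal M" using assms(5) by (rule ennreal_leI)
  finally show ?thesis .
qed

lemma dyadic_ge1: "dyadic x \<Longrightarrow> x \<ge> 1"
  unfolding dyadic_def by auto

lemma min_sum: "(a::real) \<ge> 0 \<Longrightarrow> b \<ge> 0 \<Longrightarrow> min a b * (a + b) \<le> 2 * a * b"
  by (cases "a \<le> b") (auto simp: min_def algebra_simps intro: mult_right_mono mult_left_mono)

lemma pt_sets:
  fixes P :: "pt \<Rightarrow> bool"
  assumes "Measurable.pred ((borel \<Otimes>\<^sub>M borel) \<Otimes>\<^sub>M borel) P"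
  shows "{z. P z} \<in> sets (borel :: pt measure)"
proof -
  have "{z \<in> space ((borel \<Otimes>\<^sub>M borel) \<Otimes>\<^sub>M borel). P z} \<in> sets ((borel \<Otimes>\<^sub>M borel) \<Otimes>\<^sub>M borel)"
    using assms by measurable
  then show ?thesis unfolding borel_prod by (simp add: space_pair_measure)
qed

lemma chain_alg:
  fixes a b k R :: real
  assumes "0 \<le> a" "0 \<le> b" "0 \<le> k" "0 < R"
  shows "2 * (4 * min a b) * (k * (2 * a + 2 * b) / R) \<le> 32 * k * a * b / R"
proof -
  have "2 * (4 * min a b) * (k * (2 * a + 2 * b) / R) = 16 * k * (min a b * (a + b)) / R"
    by (simp add: algebra_simps)
  also have "\<dots> \<le> 16 * k * (2 * a * b) / R"
    using assms min_sum[of a b] by (intro divide_right_mono mult_left_mono) auto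
  also have "\<dots> = 32 * k * a * b / R" by simp
  finally show ?thesis .
qed

lemma xnorm_plus_sq: "(xnorm (x + y))\<^sup>2 = (xnorm x)\<^sup>2 + 2 * (fst x * fst y + snd x * snd y) + (xnorm y)\<^sup>2"
  unfolding xnorm_sq by (simp add: power2_eq_square algebra_simps)

lemma xnorm_commute: "xnorm (x - y) = xnorm (y - x)"
  by (simp add: xnorm_norm norm_minus_commute)

lemma core:
  fixes K N N1 N2 L L1 L2 s :: real and A j1 j2 :: nat and f g1 g2 :: "pt \<Rightarrow> complex"
  assumes K: "K \<ge> 1"
    and dy: "dyadic L" "dyadic L1" "dyadic L2"
    and hN: "2400 * K ^ 4 \<le> N" "N \<le> K * N1" "N1 \<le> K * N2" "N2 \<le> K * N1" "N1 \<le> K * real A"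
    and hj: "\<bar>int j1 - int j2\<bar> \<le> 16"
    and hs: "s = 1 \<or> s = -1"
    and Lf: "L2unit f" "L2unit g1" "L2unit g2"
    and sf: "\<forall>z. z \<notin> PP N \<inter> WW s L \<longrightarrow> f z = 0"
    and sg1: "\<forall>z. z \<notin> QQ A j1 \<inter> PP N1 \<inter> SS L1 \<longrightarrow> g1 z = 0"
    and sg2: "\<forall>z. z \<notin> QQ A j2 \<inter> PP N2 \<inter> SS L2 \<longrightarrow> g2 z = 0"
  shows "norm (\<integral>p. f (fst p - snd p) * g1 (fst p) * g2 (snd p) \<partial>(lborel \<Otimes>\<^sub>M lborel))
         \<le> ((4 * (1024 * (150 * K\<^sup>2)) ^ 3)\<^sup>2 * K ^ 3 + 1) * L1 powr (5/12) * L2 powr (5/12) * L powr (5/12)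
              * (1 / sqrt N) * (N / N1) powr (1/4)"
proof -
  define c1 where "c1 = 150 * K\<^sup>2"
  define D1 where "D1 = 1024 * c1"
  have L1: "L \<ge> 1" "L1 \<ge> 1" "L2 \<ge> 1" using dy dyadic_ge1 by auto
  have "K * 1 \<le> K * K" "1 * 1 \<le> K * K" using K by (intro mult_mono; simp)+
  then have K2: "K \<le> K\<^sup>2" "1 \<le> K\<^sup>2" by (simp_all add: power2_eq_square)
  have K4: "K\<^sup>2 \<le> K ^ 4" "K ^ 3 \<le> K ^ 4" "K\<^sup>2 \<le> K ^ 3"
    using K by (auto intro!: power_increasing)
  have c1pos: "c1 > 0" unfolding c1_def using K2 K by simp
  have Kp: "K > 0" using K by simp
  have N0: "N \<ge> 2400 * K\<^sup>2" using hN(1) K4 by linarith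
  have N1b: "N1 \<ge> 2400 * K ^ 3"
  proof -
    have "K * (2400 * K ^ 3) \<le> K * N1" using hN(1,2) by (simp add: power_numeral_reduce algebra_simps)
    then show ?thesis using Kp by simp
  qed
  have N2b: "N2 \<ge> 2400 * K\<^sup>2"
  proof -
    have "K * (2400 * K\<^sup>2) \<le> K * N2" using N1b hN(3) by (simp add: power_numeral_reduce power2_eq_square algebra_simps)
    then show ?thesis using Kp by simp
  qed
  have Ab: "real A \<ge> 2400 * K\<^sup>2"
  proof -
    have "K * (2400 * K\<^sup>2) \<le> K * real A" using N1b hN(5) by (simp add: power_numeral_reduce power2_eq_square algebra_simps)
    then show ?thesis using Kp by simp
  qed
  have Apos: "A > 0" using Ab K2 by simp
  have Npos: "N > 0" "N1 > 0" "N2 > 0" using N0 N1b N2b K2 K4 by auto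
  have N1c: "16 * c1 \<le> N" "8 * c1 \<le> N1" "8 * c1 \<le> N2" "8 \<le> N1" "8 \<le> N2"
    using N0 N1b N2b K2 K4 unfolding c1_def by auto
  have Nne: "N \<noteq> 1" "N1 \<noteq> 1" "N2 \<noteq> 1" using N0 N1b N2b K2 K4 by auto
  define phi where "phi = pi * real j1 / real A"
  define cc where "cc = cos phi"
  define ss where "ss = sin phi"
  have cs: "cc\<^sup>2 + ss\<^sup>2 = 1" unfolding cc_def ss_def by simp
  have ty1: "\<bar>snd (fst z) * cc - fst (fst z) * ss\<bar> \<le> c1" if "z \<in> QQ A j1" "xnorm (fst z) \<le> 2 * N1" for z
  proof -
    have "\<bar>snd (fst z) * cc - fst (fst z) * ss\<bar> \<le> xnorm (fst z) * (18 * pi / real A)"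
      using sector_ty[OF that(1) Apos] unfolding cc_def ss_def phi_def by simp
    also have "\<dots> \<le> (2 * N1) * (18 * pi / real A)" using that(2) Apos by (intro mult_right_mono) auto
    also have "\<dots> = 36 * pi * (N1 / real A)" by simp
    also have "\<dots> \<le> 36 * 4 * K"
    proof -
      have "N1 / real A \<le> K" using hN(5) Apos by (simp add: divide_le_eq mult.commute)
      moreover have "N1 / real A \<ge> 0" using Npos by simp
      ultimately show ?thesis using pi_less_4 by (intro mult_mono) auto
    qed
    also have "\<dots> \<le> c1" unfolding c1_def using K2 by simp
    finally show ?thesis .
  qed
  have ty2: "\<bar>snd (fst z) * cc - fst (fst z) * ss\<bar> \<le> c1" if "z \<in> QQ A j2" "xnorm (fst z) \<le> 2 * N2" for z
  proof -
    have hj': "\<bar>int j2 - int j1\<bar> \<le> 16" using hj by simp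
    have "\<bar>snd (fst z) * cc - fst (fst z) * ss\<bar> \<le> xnorm (fst z) * (18 * pi / real A)"
      using sector_ty[OF that(1) Apos hj'] unfolding cc_def ss_def phi_def by simp
    also have "\<dots> \<le> (2 * (K * N1)) * (18 * pi / real A)" using that(2) hN(4) Apos by (intro mult_right_mono) auto
    also have "\<dots> = 36 * pi * K * (N1 / real A)" by simp
    also have "\<dots> \<le> 36 * 4 * K * K"
    proof -
      have "N1 / real A \<le> K" using hN(5) Apos by (simp add: divide_le_eq mult.commute)
      moreover have "N1 / real A \<ge> 0" using Npos by simp
      ultimately show ?thesis using pi_less_4 K by (intro mult_mono) auto
    qed
    also have "\<dots> \<le> c1" unfolding c1_def by (simp add: power2_eq_square)
    finally show ?thesis .
  qed
  define Sa where "Sa = {z::pt. N/2 \<le> xnorm (fst z) \<and> xnorm (fst z) \<le> 2 * N \<and> \<bar>snd z + s * xnorm (fst z)\<bar> \<le> 2 * L}"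
  define Sb where "Sb = {z::pt. \<bar>snd (fst z) * cc - fst (fst z) * ss\<bar> \<le> c1 \<and> N1/2 \<le> xnorm (fst z) \<and> xnorm (fst z) \<le> 2 * N1 \<and> \<bar>snd z + (xnorm (fst z))\<^sup>2\<bar> \<le> 2 * L1}"
  define Sc where "Sc = {z::pt. \<bar>snd (fst z) * cc - fst (fst z) * ss\<bar> \<le> c1 \<and> N2/2 \<le> xnorm (fst z) \<and> xnorm (fst z) \<le> 2 * N2 \<and> \<bar>snd z + (xnorm (fst z))\<^sup>2\<bar> \<le> 2 * L2}"
  have Sam[measurable]: "Sa \<in> sets borel" unfolding Sa_def xnorm_def by (rule pt_sets) measurable
  have Sbm[measurable]: "Sb \<in> sets borel" unfolding Sb_def xnorm_def by (rule pt_sets) measurable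
  have Scm[measurable]: "Sc \<in> sets borel" unfolding Sc_def xnorm_def by (rule pt_sets) measurable
  have le2: "\<bar>x\<bar> \<le> 2 * M" if "x \<in> (if M = 1 then {z. \<bar>z\<bar> \<le> 2} else {z. M / 2 \<le> \<bar>z\<bar> \<and> \<bar>z\<bar> \<le> 2 * M})" for x M :: real
    using that by (auto split: if_splits)
  have supa: "f z = 0" if "z \<notin> Sa" for z
  proof (rule ccontr)
    assume "f z \<noteq> 0"
    then have "z \<in> PP N" "z \<in> WW s L" using sf[rule_format, of z] by blast+
    then show False using that Nne by (auto simp: Sa_def PP_def WW_def split: if_splits)
  qed
  have supb: "g1 z = 0" if "z \<notin> Sb" for z
  proof (rule ccontr)
    assume "g1 z \<noteq> 0"
    then have z: "z \<in> QQ A j1" "z \<in> PP N1" "z \<in> SS L1" using sg1[rule_format, of z] by blast+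
    then have "xnorm (fst z) \<le> 2 * N1" "N1/2 \<le> xnorm (fst z)" using Nne by (auto simp: PP_def)
    then show False using that z ty1[OF z(1)] by (auto simp: Sb_def SS_def split: if_splits)
  qed
  have supc: "g2 z = 0" if "z \<notin> Sc" for z
  proof (rule ccontr)
    assume "g2 z \<noteq> 0"
    then have z: "z \<in> QQ A j2" "z \<in> PP N2" "z \<in> SS L2" using sg2[rule_format, of z] by blast+
    then have "xnorm (fst z) \<le> 2 * N2" "N2/2 \<le> xnorm (fst z)" using Nne by (auto simp: PP_def)
    then show False using that z ty2[OF z(1)] by (auto simp: Sc_def SS_def split: if_splits)
  qed
  have m4: "0 \<le> 4 * min a b" if "a \<ge> 1" "b \<ge> 1" for a b :: real using that by simp
  have bd1: "emeasure lborel {w. z + w \<in> Sb \<and> w \<in> Sc} \<le> ennreal (D1 * L1 * L2 / N)" if zS: "z \<in> Sa" for z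
  proof -
    obtain xi tau where z: "z = (xi, tau)" by (cases z)
    define E where "E = {w. z + w \<in> Sb \<and> w \<in> Sc}"
    define P where "P = {eta. \<bar>snd eta * cc - fst eta * ss\<bar> \<le> c1
            \<and> \<bar>snd (xi + eta) * cc - fst (xi + eta) * ss\<bar> \<le> c1
            \<and> \<bar>(tau + (xnorm xi)\<^sup>2) + 2 * (fst xi * fst eta + snd xi * snd eta)\<bar> \<le> 2 * L1 + 2 * L2}"
    have Em: "E \<in> sets borel"
    proof -
      have "E = {w \<in> space borel. z + w \<in> Sb \<and> w \<in> Sc}" by (simp add: E_def)
      also have "\<dots> \<in> sets borel" by measurable
      finally show ?thesis .
    qed
    have Pm: "P \<in> sets borel" unfolding P_def by (rule P1_sets)
    have "emeasure lborel E \<le> ennreal (2 * (4 * min L1 L2)) * emeasure lborel P"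
    proof (rule fiber_bound[OF Em Pm m4[OF L1(2,3)]])
      fix eta sig assume "(eta, sig) \<in> E"
      then have h: "\<bar>snd (xi + eta) * cc - fst (xi + eta) * ss\<bar> \<le> c1" "\<bar>tau + sig + (xnorm (xi + eta))\<^sup>2\<bar> \<le> 2 * L1"
        "\<bar>snd eta * cc - fst eta * ss\<bar> \<le> c1" "\<bar>sig + (xnorm eta)\<^sup>2\<bar> \<le> 2 * L2"
        by (auto simp: E_def Sb_def Sc_def z)
      have "(tau + (xnorm xi)\<^sup>2) + 2 * (fst xi * fst eta + snd xi * snd eta)
            = (tau + sig + (xnorm (xi + eta))\<^sup>2) - (sig + (xnorm eta)\<^sup>2)"
        by (simp add: xnorm_plus_sq)
      then show "eta \<in> P" using h unfolding P_def by auto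
    next
      fix eta sig sig' assume "(eta, sig) \<in> E" "(eta, sig') \<in> E"
      then have "\<bar>tau + sig + (xnorm (xi + eta))\<^sup>2\<bar> \<le> 2 * L1" "\<bar>sig + (xnorm eta)\<^sup>2\<bar> \<le> 2 * L2"
        "\<bar>tau + sig' + (xnorm (xi + eta))\<^sup>2\<bar> \<le> 2 * L1" "\<bar>sig' + (xnorm eta)\<^sup>2\<bar> \<le> 2 * L2"
        by (auto simp: E_def Sb_def Sc_def z)
      then show "\<bar>sig - sig'\<bar> \<le> 4 * min L1 L2" by (simp add: min_def) linarith
    qed
    moreover have "emeasure lborel P \<le> ennreal (16 * c1 * (2 * L1 + 2 * L2) / (N/2))"
      unfolding P_def
      by (rule P1_bound[OF cs]) (use c1pos L1 Npos N1c zS in \<open>auto simp: Sa_def z\<close>)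
    ultimately have "emeasure lborel E \<le> ennreal (D1 * L1 * L2 / N)"
    proof (rule emeasure_chain)
      show "0 \<le> 4 * min L1 L2" "0 \<le> 16 * c1 * (2 * L1 + 2 * L2) / (N / 2)"
        using L1 c1pos Npos by auto
      have "2 * (4 * min L1 L2) * (16 * c1 * (2 * L1 + 2 * L2) / (N / 2)) \<le> 32 * (16 * c1) * L1 * L2 / (N/2)"
        using chain_alg[of L1 L2 "16 * c1" "N/2"] L1 c1pos Npos by (simp add: mult.assoc)
      also have "\<dots> = D1 * L1 * L2 / N" unfolding D1_def by simp
      finally show "2 * (4 * min L1 L2) * (16 * c1 * (2 * L1 + 2 * L2) / (N / 2)) \<le> D1 * L1 * L2 / N" .
    qed
    then show ?thesis by (simp add: E_def)
  qed
  have bd2: "emeasure lborel {w. z - w \<in> Sa \<and> w \<in> Sc} \<le> ennreal (2 * D1 * L * L2 / N2)" if zS: "z \<in> Sb" for z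
  proof -
    obtain xi tau where z: "z = (xi, tau)" by (cases z)
    define E where "E = {w. z - w \<in> Sa \<and> w \<in> Sc}"
    define P where "P = {eta. \<bar>snd eta * cc - fst eta * ss\<bar> \<le> c1 \<and> N2/2 \<le> xnorm eta
            \<and> \<bar>tau + (xnorm eta)\<^sup>2 + s * xnorm (xi - eta)\<bar> \<le> 2 * L + 2 * L2}"
    have Em: "E \<in> sets borel"
    proof -
      have "E = {w \<in> space borel. z - w \<in> Sa \<and> w \<in> Sc}" by (simp add: E_def)
      also have "\<dots> \<in> sets borel" by measurable
      finally show ?thesis .
    qed
    have Pm: "P \<in> sets borel" unfolding P_def by (rule P2_sets)
    have "emeasure lborel E \<le> ennreal (2 * (4 * min L L2)) * emeasure lborel P"
    proof (rule fiber_bound[OF Em Pm m4[OF L1(1,3)]])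
      fix eta sig assume "(eta, sig) \<in> E"
      then have h: "\<bar>tau - sig + s * xnorm (xi - eta)\<bar> \<le> 2 * L"
        "\<bar>snd eta * cc - fst eta * ss\<bar> \<le> c1" "N2/2 \<le> xnorm eta" "\<bar>sig + (xnorm eta)\<^sup>2\<bar> \<le> 2 * L2"
        by (auto simp: E_def Sa_def Sc_def z)
      have "tau + (xnorm eta)\<^sup>2 + s * xnorm (xi - eta) = (tau - sig + s * xnorm (xi - eta)) + (sig + (xnorm eta)\<^sup>2)"
        by simp
      then show "eta \<in> P" using h unfolding P_def by auto
    next
      fix eta sig sig' assume "(eta, sig) \<in> E" "(eta, sig') \<in> E"
      then have "\<bar>tau - sig + s * xnorm (xi - eta)\<bar> \<le> 2 * L" "\<bar>sig + (xnorm eta)\<^sup>2\<bar> \<le> 2 * L2"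
        "\<bar>tau - sig' + s * xnorm (xi - eta)\<bar> \<le> 2 * L" "\<bar>sig' + (xnorm eta)\<^sup>2\<bar> \<le> 2 * L2"
        by (auto simp: E_def Sa_def Sc_def z)
      then show "\<bar>sig - sig'\<bar> \<le> 4 * min L L2" by (simp add: min_def) linarith
    qed
    moreover have "emeasure lborel P \<le> ennreal (64 * c1 * (2 * L + 2 * L2) / N2)"
      unfolding P_def
      by (rule P2_bound[OF cs]) (use c1pos L1 Npos N1c hs in auto)
    ultimately have "emeasure lborel E \<le> ennreal (2 * D1 * L * L2 / N2)"
    proof (rule emeasure_chain)
      show "0 \<le> 4 * min L L2" "0 \<le> 64 * c1 * (2 * L + 2 * L2) / N2"
        using L1 c1pos Npos by auto
      have "2 * (4 * min L L2) * (64 * c1 * (2 * L + 2 * L2) / N2) \<le> 32 * (64 * c1) * L * L2 / N2"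
        using chain_alg[of L L2 "64 * c1" "N2"] L1 c1pos Npos by (simp add: mult.assoc)
      also have "\<dots> = 2 * D1 * L * L2 / N2" unfolding D1_def by simp
      finally show "2 * (4 * min L L2) * (64 * c1 * (2 * L + 2 * L2) / N2) \<le> 2 * D1 * L * L2 / N2" .
    qed
    then show ?thesis by (simp add: E_def)
  qed
  have bd3: "emeasure lborel {w. w - z \<in> Sa \<and> w \<in> Sb} \<le> ennreal (2 * D1 * L * L1 / N1)" if zS: "z \<in> Sc" for z
  proof -
    obtain xi tau where z: "z = (xi, tau)" by (cases z)
    define E where "E = {w. w - z \<in> Sa \<and> w \<in> Sb}"
    define P where "P = {eta. \<bar>snd eta * cc - fst eta * ss\<bar> \<le> c1 \<and> N1/2 \<le> xnorm eta
            \<and> \<bar>tau + (xnorm eta)\<^sup>2 + (- s) * xnorm (xi - eta)\<bar> \<le> 2 * L + 2 * L1}"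
    have Em: "E \<in> sets borel"
    proof -
      have "E = {w \<in> space borel. w - z \<in> Sa \<and> w \<in> Sb}" by (simp add: E_def)
      also have "\<dots> \<in> sets borel" by measurable
      finally show ?thesis .
    qed
    have Pm: "P \<in> sets borel" unfolding P_def by (rule P2_sets)
    have "emeasure lborel E \<le> ennreal (2 * (4 * min L L1)) * emeasure lborel P"
    proof (rule fiber_bound[OF Em Pm m4[OF L1(1,2)]])
      fix eta sig assume "(eta, sig) \<in> E"
      then have h: "\<bar>sig - tau + s * xnorm (eta - xi)\<bar> \<le> 2 * L"
        "\<bar>snd eta * cc - fst eta * ss\<bar> \<le> c1" "N1/2 \<le> xnorm eta" "\<bar>sig + (xnorm eta)\<^sup>2\<bar> \<le> 2 * L1"
        by (auto simp: E_def Sa_def Sb_def z)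
      have "tau + (xnorm eta)\<^sup>2 + (- s) * xnorm (xi - eta) = (sig + (xnorm eta)\<^sup>2) - (sig - tau + s * xnorm (eta - xi))"
        by (simp add: xnorm_commute[of xi eta])
      then show "eta \<in> P" using h unfolding P_def by auto
    next
      fix eta sig sig' assume "(eta, sig) \<in> E" "(eta, sig') \<in> E"
      then have "\<bar>sig - tau + s * xnorm (eta - xi)\<bar> \<le> 2 * L" "\<bar>sig + (xnorm eta)\<^sup>2\<bar> \<le> 2 * L1"
        "\<bar>sig' - tau + s * xnorm (eta - xi)\<bar> \<le> 2 * L" "\<bar>sig' + (xnorm eta)\<^sup>2\<bar> \<le> 2 * L1"
        by (auto simp: E_def Sa_def Sb_def z)
      then show "\<bar>sig - sig'\<bar> \<le> 4 * min L L1" by (simp add: min_def) linarith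
    qed
    moreover have "emeasure lborel P \<le> ennreal (64 * c1 * (2 * L + 2 * L1) / N1)"
      unfolding P_def
      by (rule P2_bound[OF cs]) (use c1pos L1 Npos N1c hs in auto)
    ultimately have "emeasure lborel E \<le> ennreal (2 * D1 * L * L1 / N1)"
    proof (rule emeasure_chain)
      show "0 \<le> 4 * min L L1" "0 \<le> 64 * c1 * (2 * L + 2 * L1) / N1"
        using L1 c1pos Npos by auto
      have "2 * (4 * min L L1) * (64 * c1 * (2 * L + 2 * L1) / N1) \<le> 32 * (64 * c1) * L * L1 / N1"
        using chain_alg[of L L1 "64 * c1" "N1"] L1 c1pos Npos by (simp add: mult.assoc)
      also have "\<dots> = 2 * D1 * L * L1 / N1" unfolding D1_def by simp
      finally show "2 * (4 * min L L1) * (64 * c1 * (2 * L + 2 * L1) / N1) \<le> 2 * D1 * L * L1 / N1" .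
    qed
    then show ?thesis by (simp add: E_def)
  qed
  have fm[measurable]: "f \<in> borel_measurable borel" "g1 \<in> borel_measurable borel" "g2 \<in> borel_measurable borel"
    using Lf unfolding L2unit_def by auto
  have fml[measurable]: "f \<in> borel_measurable lborel" "g1 \<in> borel_measurable lborel" "g2 \<in> borel_measurable lborel"
    using Lf unfolding L2unit_def by auto
  define a where "a = (\<lambda>z. norm (f z))"
  define b where "b = (\<lambda>z. norm (g1 z))"
  define c where "c = (\<lambda>z. norm (g2 z))"
  have am[measurable]: "a \<in> borel_measurable borel" unfolding a_def by measurable
  have bm[measurable]: "b \<in> borel_measurable borel" unfolding b_def by measurable
  have cm[measurable]: "c \<in> borel_measurable borel" unfolding c_def by measurable
  have Iu: "(\<integral>\<^sup>+z. ennreal ((norm (h z))\<^sup>2) \<partial>lborel) \<le> 1" if "L2unit h" for h :: "pt \<Rightarrow> complex"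
  proof -
    have "(\<integral>\<^sup>+z. ennreal ((norm (h z))\<^sup>2) \<partial>lborel) = ennreal (\<integral>z. (norm (h z))\<^sup>2 \<partial>lborel)"
      using that unfolding L2unit_def by (intro nn_integral_eq_integral) auto
    then show ?thesis using that unfolding L2unit_def by simp
  qed
  have Ia: "(\<integral>\<^sup>+z. ennreal ((a z)\<^sup>2) \<partial>lborel) \<le> 1" unfolding a_def by (rule Iu[OF Lf(1)])
  have Ib: "(\<integral>\<^sup>+z. ennreal ((b z)\<^sup>2) \<partial>lborel) \<le> 1" unfolding b_def by (rule Iu[OF Lf(2)])
  have Ic: "(\<integral>\<^sup>+z. ennreal ((c z)\<^sup>2) \<partial>lborel) \<le> 1" unfolding c_def by (rule Iu[OF Lf(3)])
  have na: "\<And>z. 0 \<le> a z" and nb: "\<And>z. 0 \<le> b z" and nc: "\<And>z. 0 \<le> c z"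
    by (simp_all add: a_def b_def c_def)
  have sa: "\<And>z. z \<notin> Sa \<Longrightarrow> a z = 0" using supa by (simp add: a_def)
  have sb: "\<And>z. z \<notin> Sb \<Longrightarrow> b z = 0" using supb by (simp add: b_def)
  have sc: "\<And>z. z \<notin> Sc \<Longrightarrow> c z = 0" using supc by (simp add: c_def)
  have D1pos: "D1 > 0" unfolding D1_def using c1pos by simp
  define J where "J = (\<integral>\<^sup>+p. ennreal (a (fst p - snd p) * b (fst p) * c (snd p)) \<partial>(lborel \<Otimes>\<^sub>M lborel))"
  have J1: "J \<le> ennreal (sqrt (D1 * L1 * L2 / N))" unfolding J_def
    by (rule var1[OF am bm cm Sam Sbm Scm na nb nc Ia Ib Ic sb sc sa bd1]) (use D1pos L1 Npos in auto)
  have J2: "J \<le> ennreal (sqrt (2 * D1 * L * L2 / N2))" unfolding J_def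
    by (rule var2[OF am bm cm Sam Sbm Scm na nb nc Ia Ib Ic sb sc sa bd2]) (use D1pos L1 Npos in auto)
  have J3: "J \<le> ennreal (sqrt (2 * D1 * L * L1 / N1))" unfolding J_def
    by (rule var3[OF am bm cm Sam Sbm Scm na nb nc Ia Ib Ic sb sc sa bd3]) (use D1pos L1 Npos in auto)
  have I1: "enn2real J \<le> sqrt (D1 * L1 * L2 / N)" by (rule enn2real_leI[OF _ J1]) (use D1pos L1 Npos in simp)
  have I2: "enn2real J \<le> sqrt (2 * D1 * L * L2 / N2)" by (rule enn2real_leI[OF _ J2]) (use D1pos L1 Npos in simp)
  have I3: "enn2real J \<le> sqrt (2 * D1 * L * L1 / N1)" by (rule enn2real_leI[OF _ J3]) (use D1pos L1 Npos in simp)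
  have "norm (\<integral>p. f (fst p - snd p) * g1 (fst p) * g2 (snd p) \<partial>(lborel \<Otimes>\<^sub>M lborel))
        \<le> (\<integral>p. norm (f (fst p - snd p) * g1 (fst p) * g2 (snd p)) \<partial>(lborel \<Otimes>\<^sub>M lborel))"
    by (rule integral_norm_bound)
  also have "\<dots> = enn2real (\<integral>\<^sup>+p. ennreal (norm (f (fst p - snd p) * g1 (fst p) * g2 (snd p))) \<partial>(lborel \<Otimes>\<^sub>M lborel))"
    by (rule integral_eq_nn_integral) auto
  also have "\<dots> = enn2real J"
    unfolding J_def a_def b_def c_def by (simp add: norm_mult)
  also have "\<dots> \<le> ((4 * D1 ^ 3)\<^sup>2 * K ^ 3 + 1) * L1 powr (5/12) * L2 powr (5/12) * L powr (5/12)
              * (1 / sqrt N) * (N / N1) powr (1/4)"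
    by (rule final_alg[OF _ D1pos K Npos hN(2,3) L1 I1 I2 I3]) simp
  finally show ?thesis unfolding D1_def c1_def .
qed

theorem proposition4p7:
  "\<forall>K::real \<ge> 1. \<exists>C0 C :: real. \<forall>(N::real) (N1::real) (N2::real) (A::nat) (L::real) (L1::real) (L2::real)
      (j1::nat) (j2::nat) (s::real) (f::pt \<Rightarrow> complex) (g1::pt \<Rightarrow> complex) (g2::pt \<Rightarrow> complex).
     dyadic N \<and> dyadic N1 \<and> dyadic N2 \<and> dyadic (real A) \<and> dyadic L \<and> dyadic L1 \<and> dyadic L2
     \<and> C0 \<le> N \<and> N \<le> K * N1 \<and> N1 \<le> K * N2 \<and> N2 \<le> K * N1
     \<and> real A \<le> K * N1 \<and> N1 \<le> K * real A
     \<and> j1 < A \<and> j2 < A \<and> \<bar>int j1 - int j2\<bar> \<le> 16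
     \<and> (s = 1 \<or> s = -1)
     \<and> L2unit f \<and> L2unit g1 \<and> L2unit g2
     \<and> (\<forall>z. z \<notin> PP N \<inter> WW s L \<longrightarrow> f z = 0)
     \<and> (\<forall>z. z \<notin> QQ A j1 \<inter> PP N1 \<inter> SS L1 \<longrightarrow> g1 z = 0)
     \<and> (\<forall>z. z \<notin> QQ A j2 \<inter> PP N2 \<inter> SS L2 \<longrightarrow> g2 z = 0)
     \<longrightarrow> norm (\<integral>p. f (fst p - snd p) * g1 (fst p) * g2 (snd p) \<partial>(lborel \<Otimes>\<^sub>M lborel))
         \<le> C * L1 powr (5/12) * L2 powr (5/12) * L powr (5/12) * (1 / sqrt N) * (N / N1) powr (1/4)"
  proof (intro allI impI)
  fix K :: real assume K: "K \<ge> 1"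
  show "\<exists>C0 C :: real. \<forall>(N::real) (N1::real) (N2::real) (A::nat) (L::real) (L1::real) (L2::real)
      (j1::nat) (j2::nat) (s::real) (f::pt \<Rightarrow> complex) (g1::pt \<Rightarrow> complex) (g2::pt \<Rightarrow> complex).
     dyadic N \<and> dyadic N1 \<and> dyadic N2 \<and> dyadic (real A) \<and> dyadic L \<and> dyadic L1 \<and> dyadic L2
     \<and> C0 \<le> N \<and> N \<le> K * N1 \<and> N1 \<le> K * N2 \<and> N2 \<le> K * N1
     \<and> real A \<le> K * N1 \<and> N1 \<le> K * real A
     \<and> j1 < A \<and> j2 < A \<and> \<bar>int j1 - int j2\<bar> \<le> 16
     \<and> (s = 1 \<or> s = -1)
     \<and> L2unit f \<and> L2unit g1 \<and> L2unit g2
     \<and> (\<forall>z. z \<notin> PP N \<inter> WW s L \<longrightarrow> f z = 0)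
     \<and> (\<forall>z. z \<notin> QQ A j1 \<inter> PP N1 \<inter> SS L1 \<longrightarrow> g1 z = 0)
     \<and> (\<forall>z. z \<notin> QQ A j2 \<inter> PP N2 \<inter> SS L2 \<longrightarrow> g2 z = 0)
     \<longrightarrow> norm (\<integral>p. f (fst p - snd p) * g1 (fst p) * g2 (snd p) \<partial>(lborel \<Otimes>\<^sub>M lborel))
         \<le> C * L1 powr (5/12) * L2 powr (5/12) * L powr (5/12) * (1 / sqrt N) * (N / N1) powr (1/4)"
    apply (rule exI[of _ "2400 * K ^ 4"])
    apply (rule exI[of _ "(4 * (1024 * (150 * K\<^sup>2)) ^ 3)\<^sup>2 * K ^ 3 + 1"])
    apply (intro allI impI)
    apply (elim conjE)
    apply (rule core[OF K])
                  apply assumption+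
    done
qed

end
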